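(* For any simplicial complex $K$ and any positive integer $m$, there exists a positive integer $k$ such that the $k$-times iterated barycentric subdivision $K^{(k)}$ of $K$ is $m$-fine.
   Context: For vertices $v,w$ of a simplicial complex $K$, a sequence $p=(\sigma_1,\dots,\sigma_N)$ of $1$-simplices links $(v,w)$ if $v\in\sigma_1$, $w\in\sigma_N$ and $\sigma_i\cap\sigma_{i+1}\ne\varnothing$ for all $i$; its length is $N$. The diameter of a subcomplex $A\subset K$ is $\max_{v,w\in A_0}\min_{p\text{ links }(v,w)}\mathrm{len}(p)$. $K$ is $m$-fine if for every subcomplex $A\subset K$ with diameter $\le m$ one can choose a contractible subcomplex $Z_A$ containing $A$ in such a way that $Z_A\subset Z_B$ whenever $A\subset B$. *)

theory Defs
  imports "HOL-Analysis.Analysis" "HOL-Library.FSet" "HOL-Library.Extended_Nat"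
begin

definition simplicial_complex :: "'v set set \<Rightarrow> bool" where
  "simplicial_complex K \<longleftrightarrow>
     (\<forall>\<sigma>\<in>K. finite \<sigma> \<and> \<sigma> \<noteq> {}) \<and>
     (\<forall>\<sigma>\<in>K. \<forall>\<tau>. \<tau> \<subseteq> \<sigma> \<and> \<tau> \<noteq> {} \<longrightarrow> \<tau> \<in> K)"

definition vertices :: "'v set set \<Rightarrow> 'v set" where
  "vertices K = \<Union>K"

definition subcomplex :: "'v set set \<Rightarrow> 'v set set \<Rightarrow> bool" where
  "subcomplex K A \<longleftrightarrow> A \<subseteq> K \<and> simplicial_complex A"

definition links :: "'v set set \<Rightarrow> 'v set list \<Rightarrow> 'v \<Rightarrow> 'v \<Rightarrow> bool" where
  "links K p v w \<longleftrightarrow> p \<noteq> [] \<and> (\<forall>\<sigma>\<in>set p. \<sigma> \<in> K \<and> card \<sigma> = 2) \<and>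
     v \<in> hd p \<and> w \<in> last p \<and>
     (\<forall>i. Suc i < length p \<longrightarrow> p ! i \<inter> p ! Suc i \<noteq> {})"

definition link_dist :: "'v set set \<Rightarrow> 'v \<Rightarrow> 'v \<Rightarrow> enat" where
  "link_dist K v w = (INF p\<in>{p. links K p v w}. enat (length p))"

definition diameter :: "'v set set \<Rightarrow> 'v set set \<Rightarrow> enat" where
  "diameter K A = (SUP v\<in>vertices A. SUP w\<in>vertices A. link_dist K v w)"

text \<open>Geometric realization: points are barycentric coordinate functions, with
  the coherent (weak) topology with respect to the closed simplices.\<close>

definition closed_simplex :: "'v set \<Rightarrow> ('v \<Rightarrow> real) set" where
  "closed_simplex \<sigma> = {x. (\<forall>v. 0 \<le> x v) \<and> (\<forall>v. v \<notin> \<sigma> \<longrightarrow> x v = 0) \<and> sum x \<sigma> = 1}"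

definition realization :: "'v set set \<Rightarrow> ('v \<Rightarrow> real) topology" where
  "realization K = topology (\<lambda>U. U \<subseteq> (\<Union>\<sigma>\<in>K. closed_simplex \<sigma>) \<and>
      (\<forall>\<sigma>\<in>K. openin (top_of_set (closed_simplex \<sigma>)) (U \<inter> closed_simplex \<sigma>)))"

definition contractible_complex :: "'v set set \<Rightarrow> bool" where
  "contractible_complex K \<longleftrightarrow> contractible_space (realization K)"

definition m_fine :: "nat \<Rightarrow> 'v set set \<Rightarrow> bool" where
  "m_fine m K \<longleftrightarrow> (\<exists>Z. (\<forall>A. subcomplex K A \<and> A \<noteq> {} \<and> diameter K A \<le> enat m \<longrightarrow>
        subcomplex K (Z A) \<and> A \<subseteq> Z A \<and> contractible_complex (Z A)) \<and>
      (\<forall>A B. subcomplex K A \<and> A \<noteq> {} \<and> diameter K A \<le> enat m \<and>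
             subcomplex K B \<and> B \<noteq> {} \<and> diameter K B \<le> enat m \<and> A \<subseteq> B \<longrightarrow> Z A \<subseteq> Z B))"

text \<open>Vertex type closed under forming finite sets, so that barycentric subdivision
  can be iterated on a single type.\<close>
datatype 'a vtx = Base 'a | Bary "'a vtx fset"

text \<open>Barycentric subdivision: vertices are simplices of K (encoded as Bary),
  simplices are nonempty finite chains of simplices of K.\<close>
definition bsd :: "'a vtx set set \<Rightarrow> 'a vtx set set" where
  "bsd K = {(\<lambda>s. Bary (Abs_fset s)) ` C | C. C \<subseteq> K \<and> finite C \<and> C \<noteq> {} \<and>
              (\<forall>s\<in>C. \<forall>t\<in>C. s \<subseteq> t \<or> t \<subseteq> s)}"

definition iterated_bsd :: "nat \<Rightarrow> 'a set set \<Rightarrow> 'a vtx set set" where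
  "iterated_bsd k K = (bsd ^^ k) ((`) Base ` K)"

end

theory Submission
  imports Defs
begin

abbreviation rspace :: "'v set set \<Rightarrow> ('v \<Rightarrow> real) set" where
  "rspace K \<equiv> (\<Union>\<sigma>\<in>K. closed_simplex \<sigma>)"

lemma istopology_real:
  "istopology (\<lambda>U. U \<subseteq> rspace K \<and>
      (\<forall>\<sigma>\<in>K. openin (top_of_set (closed_simplex \<sigma>)) (U \<inter> closed_simplex \<sigma>)))"
proof -
  have 1: "openin (top_of_set (closed_simplex \<sigma>)) (S \<inter> T \<inter> closed_simplex \<sigma>)"
    if "openin (top_of_set (closed_simplex \<sigma>)) (S \<inter> closed_simplex \<sigma>)"
       "openin (top_of_set (closed_simplex \<sigma>)) (T \<inter> closed_simplex \<sigma>)" for S T :: "('a \<Rightarrow> real) set" and \<sigma>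
  proof -
    have "openin (top_of_set (closed_simplex \<sigma>)) ((S \<inter> closed_simplex \<sigma>) \<inter> (T \<inter> closed_simplex \<sigma>))"
      using that by (rule openin_Int)
    moreover have "(S \<inter> closed_simplex \<sigma>) \<inter> (T \<inter> closed_simplex \<sigma>) = S \<inter> T \<inter> closed_simplex \<sigma>" by blast
    ultimately show ?thesis by simp
  qed
  have 2: "openin (top_of_set (closed_simplex \<sigma>)) (\<Union>\<K> \<inter> closed_simplex \<sigma>)"
    if "\<forall>S\<in>\<K>. openin (top_of_set (closed_simplex \<sigma>)) (S \<inter> closed_simplex \<sigma>)"
    for \<K> :: "('a \<Rightarrow> real) set set" and \<sigma>
  proof -
    have "openin (top_of_set (closed_simplex \<sigma>)) (\<Union>S\<in>\<K>. S \<inter> closed_simplex \<sigma>)"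
      using that by (intro openin_Union) auto
    moreover have "(\<Union>S\<in>\<K>. S \<inter> closed_simplex \<sigma>) = \<Union>\<K> \<inter> closed_simplex \<sigma>" by blast
    ultimately show ?thesis by simp
  qed
  show ?thesis unfolding istopology_def
  proof (intro conjI allI impI)
    fix S T :: "('a \<Rightarrow> real) set"
    assume S: "S \<subseteq> rspace K \<and> (\<forall>\<sigma>\<in>K. openin (top_of_set (closed_simplex \<sigma>)) (S \<inter> closed_simplex \<sigma>))"
      and T: "T \<subseteq> rspace K \<and> (\<forall>\<sigma>\<in>K. openin (top_of_set (closed_simplex \<sigma>)) (T \<inter> closed_simplex \<sigma>))"
    show "S \<inter> T \<subseteq> rspace K" using S by blast
    show "\<forall>\<sigma>\<in>K. openin (top_of_set (closed_simplex \<sigma>)) (S \<inter> T \<inter> closed_simplex \<sigma>)"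
      using S T 1 by metis
  next
    fix \<K> :: "('a \<Rightarrow> real) set set"
    assume H: "\<forall>S\<in>\<K>. S \<subseteq> rspace K \<and> (\<forall>\<sigma>\<in>K. openin (top_of_set (closed_simplex \<sigma>)) (S \<inter> closed_simplex \<sigma>))"
    show "\<Union>\<K> \<subseteq> rspace K" using H by blast
    show "\<forall>\<sigma>\<in>K. openin (top_of_set (closed_simplex \<sigma>)) (\<Union>\<K> \<inter> closed_simplex \<sigma>)"
      using H 2 by metis
  qed
qed

lemma openin_realization:
  "openin (realization K) U \<longleftrightarrow> U \<subseteq> rspace K \<and>
      (\<forall>\<sigma>\<in>K. openin (top_of_set (closed_simplex \<sigma>)) (U \<inter> closed_simplex \<sigma>))"
  unfolding realization_def using istopology_real[of K] by simp

lemma topspace_realization: "topspace (realization K) = rspace K"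
proof -
  have "openin (realization K) (rspace K)"
    unfolding openin_realization
  proof (intro conjI ballI)
    fix \<sigma> assume "\<sigma> \<in> K"
    then have "rspace K \<inter> closed_simplex \<sigma> = topspace (top_of_set (closed_simplex \<sigma>))" by auto
    then show "openin (top_of_set (closed_simplex \<sigma>)) (rspace K \<inter> closed_simplex \<sigma>)"
      by (metis openin_topspace)
  qed auto
  then have "rspace K \<subseteq> topspace (realization K)" by (rule openin_subset)
  moreover have "topspace (realization K) \<subseteq> rspace K"
    using openin_realization[of K "topspace (realization K)"] by auto
  ultimately show ?thesis by blast
qed

lemma closed_closed_simplex:
  assumes "finite \<sigma>"
  shows "closed (closed_simplex \<sigma>)"
proof -
  have eq: "closed_simplex \<sigma> = (\<Inter>v. {x. 0 \<le> x v}) \<inter> (\<Inter>v\<in>-\<sigma>. {x. x v = 0}) \<inter> {x. (\<Sum>v\<in>\<sigma>. x v) = 1}"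
    unfolding closed_simplex_def by auto
  have c1: "closed {x::'a \<Rightarrow> real. 0 \<le> x v}" for v
    by (rule closed_Collect_le) (auto intro: continuous_intros)
  have c2: "closed {x::'a \<Rightarrow> real. x v = 0}" for v
    by (rule closed_Collect_eq) (auto intro: continuous_intros)
  have c3: "closed {x::'a \<Rightarrow> real. (\<Sum>v\<in>\<sigma>. x v) = 1}"
    by (rule closed_Collect_eq) (auto intro!: continuous_intros continuous_on_sum)
  show ?thesis unfolding eq using c1 c2 c3 by (intro closed_Int closed_INT) auto
qed

lemma continuous_map_from_realization:
  assumes "\<And>\<sigma>. \<sigma> \<in> K \<Longrightarrow> continuous_map (top_of_set (closed_simplex \<sigma>)) Y f"
    and "\<And>x. x \<in> rspace K \<Longrightarrow> f x \<in> topspace Y"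
  shows "continuous_map (realization K) Y f"
  unfolding continuous_map_def topspace_realization
proof (intro conjI allI impI)
  show "f \<in> rspace K \<rightarrow> topspace Y" using assms(2) by blast
  fix U assume U: "openin Y U"
  show "openin (realization K) {x \<in> rspace K. f x \<in> U}"
    unfolding openin_realization
  proof (intro conjI ballI)
    show "{x \<in> rspace K. f x \<in> U} \<subseteq> rspace K" by blast
    fix \<sigma> assume s: "\<sigma> \<in> K"
    have "openin (top_of_set (closed_simplex \<sigma>)) {x \<in> topspace (top_of_set (closed_simplex \<sigma>)). f x \<in> U}"
      using openin_continuous_map_preimage[OF assms(1)[OF s] U] .
    moreover have "{x \<in> topspace (top_of_set (closed_simplex \<sigma>)). f x \<in> U} = {x \<in> rspace K. f x \<in> U} \<inter> closed_simplex \<sigma>"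
      using s by auto
    ultimately show "openin (top_of_set (closed_simplex \<sigma>)) ({x \<in> rspace K. f x \<in> U} \<inter> closed_simplex \<sigma>)"
      by simp
  qed
qed

lemma continuous_map_into_realization:
  assumes f: "continuous_map X euclidean f" and T: "finite T" "T \<subseteq> K"
    and fin: "\<And>\<tau>. \<tau> \<in> K \<Longrightarrow> finite \<tau>"
    and im: "\<And>x. x \<in> topspace X \<Longrightarrow> f x \<in> (\<Union>\<tau>\<in>T. closed_simplex \<tau>)"
  shows "continuous_map X (realization K) f"
  unfolding continuous_map_def topspace_realization
proof (intro conjI allI impI)
  show "f \<in> topspace X \<rightarrow> rspace K" using im T by blast
  fix V assume V: "openin (realization K) V"
  have cl: "closedin X {x \<in> topspace X. f x \<in> closed_simplex \<tau> - V}" if "\<tau> \<in> T" for \<tau>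
  proof -
    have tK: "\<tau> \<in> K" using that T by blast
    have "openin (top_of_set (closed_simplex \<tau>)) (V \<inter> closed_simplex \<tau>)"
      using V tK unfolding openin_realization by blast
    then have "closedin (top_of_set (closed_simplex \<tau>)) (closed_simplex \<tau> - (V \<inter> closed_simplex \<tau>))"
      by (metis closedin_diff closedin_topspace topspace_euclidean_subtopology)
    then have "closedin euclidean (closed_simplex \<tau> - V)"
      using closed_closed_simplex[OF fin[OF tK]]
      by (metis Diff_Int2 Diff_Int_distrib2 Int_absorb closed_closedin closedin_closed_trans)
    then show ?thesis by (rule closedin_continuous_map_preimage[OF f])
  qed
  have eq: "{x \<in> topspace X. f x \<in> V} = topspace X - (\<Union>\<tau>\<in>T. {x \<in> topspace X. f x \<in> closed_simplex \<tau> - V})"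
    using im by blast
  show "openin X {x \<in> topspace X. f x \<in> V}"
    unfolding eq using cl T(1) by (intro openin_diff openin_topspace closedin_Union) auto
qed

lemma continuous_map_from_prod_realization:
  assumes cont: "\<And>\<sigma>. \<sigma> \<in> K \<Longrightarrow> continuous_map (prod_topology (top_of_set {0..1}) (top_of_set (closed_simplex \<sigma>))) Y h"
    and im: "\<And>t x. t \<in> {0..1} \<Longrightarrow> x \<in> rspace K \<Longrightarrow> h (t,x) \<in> topspace Y"
  shows "continuous_map (prod_topology (top_of_set {0..1::real}) (realization K)) Y h"
  unfolding continuous_map_def topspace_prod_topology topspace_realization
proof (intro conjI allI impI)
  show "h \<in> topspace (top_of_set {0..1}) \<times> rspace K \<rightarrow> topspace Y" using im by fastforce
  fix U assume U: "openin Y U"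
  define W where "W = {p \<in> topspace (top_of_set {0..1::real}) \<times> rspace K. h p \<in> U}"
  define Ws where "Ws \<sigma> = {p \<in> topspace (prod_topology (top_of_set {0..1::real}) (top_of_set (closed_simplex \<sigma>))). h p \<in> U}" for \<sigma>
  have Wso: "openin (prod_topology (top_of_set {0..1::real}) (top_of_set (closed_simplex \<sigma>))) (Ws \<sigma>)" if "\<sigma> \<in> K" for \<sigma>
    unfolding Ws_def using openin_continuous_map_preimage[OF cont[OF that] U] .
  have WsW: "Ws \<sigma> \<subseteq> W" if "\<sigma> \<in> K" for \<sigma>
    unfolding Ws_def W_def using that by auto
  have "openin (prod_topology (top_of_set {0..1::real}) (realization K)) W"
    unfolding openin_prod_topology_alt
  proof (intro allI impI)
    fix t x assume tx: "(t, x) \<in> W"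
    have tx': "t \<in> topspace (top_of_set {0..1::real})" "x \<in> rspace K" "h (t,x) \<in> U"
      using tx unfolding W_def by blast+
    then have t01: "t \<in> {0..1}" and xK: "x \<in> rspace K" and hU: "h (t,x) \<in> U"
      by simp_all
    obtain \<sigma>0 where s0: "\<sigma>0 \<in> K" "x \<in> closed_simplex \<sigma>0" using xK by blast
    have txW: "(t,x) \<in> Ws \<sigma>0" unfolding Ws_def using t01 s0 hU by simp
    have "\<exists>U V. openin (top_of_set {0..1::real}) U \<and> openin (top_of_set (closed_simplex \<sigma>0)) V \<and>
      t \<in> U \<and> x \<in> V \<and> U \<times> V \<subseteq> Ws \<sigma>0"
      using Wso[OF s0(1)] txW unfolding openin_prod_topology_alt by (elim allE impE) 
    then obtain U1 V1 where UV1: "openin (top_of_set {0..1::real}) U1" "openin (top_of_set (closed_simplex \<sigma>0)) V1"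
      "t \<in> U1" "x \<in> V1" "U1 \<times> V1 \<subseteq> Ws \<sigma>0"
      by blast
    have "\<exists>e>0. \<forall>t'\<in>{0..1}. dist t' t < e \<longrightarrow> t' \<in> U1"
      using UV1(1,3) unfolding openin_euclidean_subtopology_iff by blast
    then obtain e where e: "e > 0" "\<And>t'. t' \<in> {0..1} \<Longrightarrow> dist t' t < e \<Longrightarrow> t' \<in> U1"
      by blast
    define J where "J = {0..1} \<inter> cball t (e/2)"
    have Jc: "compactin (top_of_set {0..1::real}) J"
      unfolding J_def compactin_subtopology compactin_euclidean_iff
      by (auto intro!: compact_Int_closed simp: Int_commute)
    have J01: "J \<subseteq> {0..1}" unfolding J_def by blast
    have JU: "\<And>t'. t' \<in> J \<Longrightarrow> h (t', x) \<in> U"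
    proof -
      fix t' assume "t' \<in> J"
      then have "t' \<in> U1" using e unfolding J_def by (auto simp: dist_commute)
      then have "(t', x) \<in> Ws \<sigma>0" using UV1 by blast
      then show "h (t', x) \<in> U" unfolding Ws_def by auto
    qed
    define V where "V = {y \<in> rspace K. \<forall>t'\<in>J. h (t', y) \<in> U}"
    have Vo: "openin (realization K) V"
      unfolding openin_realization
    proof (intro conjI ballI)
      show "V \<subseteq> rspace K" unfolding V_def by blast
      fix \<sigma> assume s: "\<sigma> \<in> K"
      show "openin (top_of_set (closed_simplex \<sigma>)) (V \<inter> closed_simplex \<sigma>)"
      proof (subst openin_subopen, intro ballI)
        fix y assume y: "y \<in> V \<inter> closed_simplex \<sigma>"
        have "J \<times> {y} \<subseteq> Ws \<sigma>"
        proof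
          fix p assume "p \<in> J \<times> {y}"
          then obtain t' where p: "p = (t', y)" "t' \<in> J" by blast
          then have "t' \<in> {0..1}" using J01 by blast
          moreover have "h (t', y) \<in> U" using y p(2) unfolding V_def by blast
          ultimately show "p \<in> Ws \<sigma>" unfolding Ws_def p(1) using y by simp
        qed
        then obtain U' V' where UV': "openin (top_of_set {0..1::real}) U'" "openin (top_of_set (closed_simplex \<sigma>)) V'"
          "J \<subseteq> U'" "y \<in> V'" "U' \<times> V' \<subseteq> Ws \<sigma>"
          using tube_lemma_left[OF Wso[OF s] Jc, of y] y by auto
        have "V' \<subseteq> V \<inter> closed_simplex \<sigma>"
        proof
          fix y' assume y': "y' \<in> V'"
          then have yc: "y' \<in> closed_simplex \<sigma>" using openin_subset[OF UV'(2)] by auto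
          have "\<forall>t'\<in>J. h (t', y') \<in> U"
            using UV'(3,5) y' unfolding Ws_def by blast
          then show "y' \<in> V \<inter> closed_simplex \<sigma>" using yc s unfolding V_def by blast
        qed
        then show "\<exists>T. openin (top_of_set (closed_simplex \<sigma>)) T \<and> y \<in> T \<and> T \<subseteq> V \<inter> closed_simplex \<sigma>"
          using UV' by blast
      qed
    qed
    define U0 where "U0 = {0..1} \<inter> ball t (e/2)"
    have U0o: "openin (top_of_set {0..1::real}) U0"
      unfolding U0_def by (rule openin_open_Int) auto
    show "\<exists>U V. openin (top_of_set {0..1}) U \<and> openin (realization K) V \<and> t \<in> U \<and> x \<in> V \<and> U \<times> V \<subseteq> W"
    proof (intro exI conjI)
      show "openin (top_of_set {0..1}) U0" by (rule U0o)
      show "openin (realization K) V" by (rule Vo)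
      show "t \<in> U0" unfolding U0_def using t01 e by auto
      show "x \<in> V" unfolding V_def using xK JU by blast
      have U0J: "U0 \<subseteq> J" unfolding U0_def J_def by auto
      show "U0 \<times> V \<subseteq> W"
      proof
        fix p assume "p \<in> U0 \<times> V"
        then obtain t' y where p: "p = (t', y)" "t' \<in> J" "y \<in> V" using U0J by blast
        then have "t' \<in> {0..1}" "y \<in> rspace K" "h (t', y) \<in> U" using J01 unfolding V_def by blast+
        then show "p \<in> W" unfolding W_def p(1) by simp
      qed
    qed
  qed
  then show "openin (prod_topology (top_of_set {0..1}) (realization K))
          {x \<in> topspace (top_of_set {0..1}) \<times> rspace K. h x \<in> U}"
    unfolding W_def .
qed



lemma infinite_vtx: "infinite (UNIV :: 'a vtx set)"
proof
  assume fin: "finite (UNIV :: 'a vtx set)"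
  have inj: "inj_on (\<lambda>s. Bary (Abs_fset s)) (Pow (UNIV :: 'a vtx set))"
  proof (rule inj_onI)
    fix s t :: "'a vtx set" assume "s \<in> Pow UNIV" "t \<in> Pow UNIV" "Bary (Abs_fset s) = Bary (Abs_fset t)"
    then have "Abs_fset s = Abs_fset t" by simp
    moreover have "finite s" "finite t" using finite_subset[OF subset_UNIV fin] by auto
    ultimately show "s = t" by (metis Abs_fset_inverse mem_Collect_eq)
  qed
  have "card (Pow (UNIV :: 'a vtx set)) \<le> card (UNIV :: 'a vtx set)"
    using card_inj_on_le[OF inj _ fin] by simp
  moreover have "card (Pow (UNIV :: 'a vtx set)) = 2 ^ card (UNIV :: 'a vtx set)"
    by (rule card_Pow[OF fin])
  ultimately show False
    by (metis less_exp not_le)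
qed

lemma fset_Abs_fset_finite [simp]: "finite s \<Longrightarrow> fset (Abs_fset s) = s"
  by (simp add: Abs_fset_inverse)

lemma chain_Union_mem:
  assumes "finite C" "C \<noteq> {}" "\<forall>s\<in>C. \<forall>t\<in>C. s \<subseteq> t \<or> t \<subseteq> s"
  shows "\<Union>C \<in> C"
  using assms
proof (induction C rule: finite_ne_induct)
  case (singleton x) then show ?case by simp
next
  case (insert x F)
  then have "\<Union>F \<in> F" by blast
  then have "x \<subseteq> \<Union>F \<or> \<Union>F \<subseteq> x" using insert.prems by blast
  then show ?case using \<open>\<Union>F \<in> F\<close> by (auto simp: sup.absorb1 sup.absorb2)
qed

lemma chain_Inter_mem:
  assumes "finite C" "C \<noteq> {}" "\<forall>s\<in>C. \<forall>t\<in>C. s \<subseteq> t \<or> t \<subseteq> s"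
  shows "\<Inter>C \<in> C"
  using assms
proof (induction C rule: finite_ne_induct)
  case (singleton x) then show ?case by simp
next
  case (insert x F)
  then have "\<Inter>F \<in> F" by blast
  then have "x \<subseteq> \<Inter>F \<or> \<Inter>F \<subseteq> x" using insert.prems by blast
  then show ?case using \<open>\<Inter>F \<in> F\<close> by (auto simp: inf.absorb1 inf.absorb2)
qed

definition chainset :: "'v set set \<Rightarrow> bool" where
  "chainset C \<longleftrightarrow> (\<forall>s\<in>C. \<forall>t\<in>C. s \<subseteq> t \<or> t \<subseteq> s)"

abbreviation BA :: "'a vtx set \<Rightarrow> 'a vtx" where "BA s \<equiv> Bary (Abs_fset s)"

lemma mem_bsd: "\<sigma> \<in> bsd K \<longleftrightarrow> (\<exists>C. \<sigma> = BA ` C \<and> C \<subseteq> K \<and> finite C \<and> C \<noteq> {} \<and> chainset C)"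
  unfolding bsd_def chainset_def by (rule iffI; (elim CollectE exE)?; (intro CollectI exI)?; assumption)

lemma bsd_mono: "K \<subseteq> L \<Longrightarrow> bsd K \<subseteq> bsd L"
proof
  fix \<sigma> assume "K \<subseteq> L" "\<sigma> \<in> bsd K"
  then obtain C where "\<sigma> = BA ` C" "C \<subseteq> K" "finite C" "C \<noteq> {}" "chainset C"
    unfolding mem_bsd by blast
  then show "\<sigma> \<in> bsd L" unfolding mem_bsd using \<open>K \<subseteq> L\<close> by blast
qed

lemma bsd_pow_mono: "K \<subseteq> L \<Longrightarrow> (bsd ^^ n) K \<subseteq> (bsd ^^ n) L"
  by (induction n) (auto simp: bsd_mono)

lemma simplicial_bsd:
  assumes "simplicial_complex K"
  shows "simplicial_complex (bsd K)"
  unfolding simplicial_complex_def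
proof (intro conjI ballI allI impI)
  fix \<sigma> assume "\<sigma> \<in> bsd K"
  then obtain C where C: "\<sigma> = (\<lambda>s. Bary (Abs_fset s)) ` C" "C \<subseteq> K" "finite C" "C \<noteq> {}"
    unfolding mem_bsd by blast
  then show "finite \<sigma>" "\<sigma> \<noteq> {}" by auto
next
  fix \<sigma> \<tau> assume s: "\<sigma> \<in> bsd K" and t: "\<tau> \<subseteq> \<sigma> \<and> \<tau> \<noteq> {}"
  then obtain C where C: "\<sigma> = (\<lambda>s. Bary (Abs_fset s)) ` C" "C \<subseteq> K" "finite C" "C \<noteq> {}"
      "\<forall>s\<in>C. \<forall>t\<in>C. s \<subseteq> t \<or> t \<subseteq> s"
    unfolding mem_bsd chainset_def by blast
  define C' where "C' = {s \<in> C. Bary (Abs_fset s) \<in> \<tau>}"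
  have C'C: "C' \<subseteq> C" unfolding C'_def by blast
  have eq: "\<tau> = (\<lambda>s. Bary (Abs_fset s)) ` C'"
  proof
    show "\<tau> \<subseteq> (\<lambda>s. Bary (Abs_fset s)) ` C'"
    proof
      fix x assume x: "x \<in> \<tau>"
      then have "x \<in> \<sigma>" using t by blast
      then obtain s where "s \<in> C" "x = Bary (Abs_fset s)" using C(1) by blast
      then show "x \<in> (\<lambda>s. Bary (Abs_fset s)) ` C'" using x unfolding C'_def by blast
    qed
    show "(\<lambda>s. Bary (Abs_fset s)) ` C' \<subseteq> \<tau>" unfolding C'_def by blast
  qed
  moreover have "C' \<subseteq> K" using C'C C(2) by blast
  moreover have "finite C'" using C'C C(3) finite_subset by blast
  moreover have "C' \<noteq> {}" using eq t by blast
  moreover have "\<forall>s\<in>C'. \<forall>t\<in>C'. s \<subseteq> t \<or> t \<subseteq> s" using C'C C(5) by blast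
  ultimately show "\<tau> \<in> bsd K" unfolding mem_bsd chainset_def by blast
qed

lemma simplicial_bsd_pow: "simplicial_complex K \<Longrightarrow> simplicial_complex ((bsd ^^ n) K)"
  by (induction n) (auto simp: simplicial_bsd)

lemma BA_inj: "finite s \<Longrightarrow> finite t \<Longrightarrow> BA s = BA t \<Longrightarrow> s = t"
  by (metis fset_Abs_fset_finite vtx.inject(2))

lemma inj_on_BA: "(\<And>s. s \<in> C \<Longrightarrow> finite s) \<Longrightarrow> inj_on BA C"
  by (meson BA_inj inj_onI)

lemma simplicial_finite: "simplicial_complex K \<Longrightarrow> \<sigma> \<in> K \<Longrightarrow> finite \<sigma>"
  unfolding simplicial_complex_def by blast

lemma simplicial_nonempty: "simplicial_complex K \<Longrightarrow> \<sigma> \<in> K \<Longrightarrow> \<sigma> \<noteq> {}"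
  unfolding simplicial_complex_def by blast

lemma simplicial_face: "simplicial_complex K \<Longrightarrow> \<sigma> \<in> K \<Longrightarrow> \<tau> \<subseteq> \<sigma> \<Longrightarrow> \<tau> \<noteq> {} \<Longrightarrow> \<tau> \<in> K"
  unfolding simplicial_complex_def by blast

definition wt :: "'a vtx \<Rightarrow> 'a vtx \<Rightarrow> real" where
  "wt z u = (case z of Bary F \<Rightarrow> if u \<in> fset F then 1 / real (card (fset F)) else 0 | Base _ \<Rightarrow> 0)"

lemma wt_BA: "finite s \<Longrightarrow> wt (BA s) u = (if u \<in> s then 1 / real (card s) else 0)"
  unfolding wt_def by simp

lemma wt_nonneg: "wt z u \<ge> 0"
  unfolding wt_def by (auto split: vtx.split)

definition beta :: "('a vtx \<Rightarrow> real) \<Rightarrow> 'a vtx \<Rightarrow> real" where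
  "beta y u = (\<Sum>z\<in>{z. y z \<noteq> 0}. y z * wt z u)"

lemma beta_on:
  assumes "y \<in> closed_simplex \<tau>" "finite \<tau>"
  shows "beta y u = (\<Sum>z\<in>\<tau>. y z * wt z u)"
  unfolding beta_def
proof (rule sum.mono_neutral_left)
  show "finite \<tau>" by fact
  show "{z. y z \<noteq> 0} \<subseteq> \<tau>" using assms(1) unfolding closed_simplex_def by blast
  show "\<forall>i\<in>\<tau> - {z. y z \<noteq> 0}. y i * wt i u = 0" by simp
qed

lemma cont_coord: "continuous_on A (\<lambda>x::'v \<Rightarrow> real. x v)"
  by (rule continuous_on_subset[OF continuous_on_product_coordinates subset_UNIV])

lemma beta_cont:
  assumes "finite \<tau>"
  shows "continuous_on (closed_simplex \<tau>) beta"
proof (rule continuous_on_coordinatewise_then_product)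
  fix u
  have "continuous_on (closed_simplex \<tau>) (\<lambda>y. \<Sum>z\<in>\<tau>. y z * wt z u)"
    by (intro continuous_on_sum continuous_on_mult cont_coord continuous_on_const)
  then show "continuous_on (closed_simplex \<tau>) (\<lambda>y. beta y u)"
    by (rule continuous_on_eq) (simp add: beta_on[OF _ assms])
qed

lemma sum_indicator_const:
  assumes "finite U" "s \<subseteq> U"
  shows "(\<Sum>u\<in>U. if u \<in> s then c else 0) = real (card s) * (c::real)"
proof -
  have "(\<Sum>u\<in>U. if u \<in> s then c else 0) = real (card (U \<inter> s)) * c"
    using sum.inter_restrict[OF assms(1), of "\<lambda>_. c" s] by simp
  also have "U \<inter> s = s" using assms(2) by blast
  finally show ?thesis .
qed

lemma beta_in:
  assumes L: "simplicial_complex L" and C: "C \<subseteq> L" "finite C" "C \<noteq> {}" "chainset C"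
    and y: "y \<in> closed_simplex (BA ` C)"
  shows "beta y \<in> closed_simplex (\<Union>C)"
proof -
  have finC: "\<And>s. s \<in> C \<Longrightarrow> finite s" using C L simplicial_finite by blast
  have neC: "\<And>s. s \<in> C \<Longrightarrow> s \<noteq> {}" using C L simplicial_nonempty by blast
  have inj: "inj_on BA C" by (rule inj_on_BA[OF finC])
  have fin\<tau>: "finite (BA ` C)" using C by simp
  have b: "beta y u = (\<Sum>s\<in>C. y (BA s) * wt (BA s) u)" for u
    using beta_on[OF y fin\<tau>] sum.reindex[OF inj] by (simp add: o_def)
  have top: "\<Union>C \<in> C" using chain_Union_mem C unfolding chainset_def by blast
  have fintop: "finite (\<Union>C)" using finC C by blast
  have ynn: "\<And>z. y z \<ge> 0" using y unfolding closed_simplex_def by blast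
  have ysum: "(\<Sum>z\<in>BA ` C. y z) = 1" using y unfolding closed_simplex_def by blast
  show ?thesis unfolding closed_simplex_def
  proof (intro CollectI conjI allI impI)
    fix u show "0 \<le> beta y u" unfolding b by (intro sum_nonneg mult_nonneg_nonneg ynn wt_nonneg)
  next
    fix u assume "u \<notin> \<Union>C"
    then show "beta y u = 0" unfolding b using finC by (intro sum.neutral) (auto simp: wt_BA)
  next
    have "(\<Sum>u\<in>\<Union>C. beta y u) = (\<Sum>s\<in>C. \<Sum>u\<in>\<Union>C. y (BA s) * wt (BA s) u)"
      unfolding b by (rule sum.swap)
    also have "\<dots> = (\<Sum>s\<in>C. y (BA s))"
    proof (rule sum.cong[OF refl])
      fix s assume s: "s \<in> C"
      have "(\<Sum>u\<in>\<Union>C. y (BA s) * wt (BA s) u) = y (BA s) * (\<Sum>u\<in>\<Union>C. wt (BA s) u)"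
        by (simp add: sum_distrib_left)
      also have "(\<Sum>u\<in>\<Union>C. wt (BA s) u) = (\<Sum>u\<in>\<Union>C. if u \<in> s then 1 / real (card s) else 0)"
        using finC[OF s] by (simp add: wt_BA)
      also have "\<dots> = real (card s) * (1 / real (card s))"
        using s fintop by (intro sum_indicator_const) auto
      also have "\<dots> = 1" using finC[OF s] neC[OF s] by simp
      finally show "(\<Sum>u\<in>\<Union>C. y (BA s) * wt (BA s) u) = y (BA s)" by simp
    qed
    also have "\<dots> = (\<Sum>z\<in>BA ` C. y z)" by (simp add: sum.reindex[OF inj])
    finally show "(\<Sum>u\<in>\<Union>C. beta y u) = 1" using ysum by simp
  qed
qed

lemma cs_nonneg: "x \<in> closed_simplex \<sigma> \<Longrightarrow> 0 \<le> x v"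
  unfolding closed_simplex_def by blast
lemma cs_zero: "x \<in> closed_simplex \<sigma> \<Longrightarrow> v \<notin> \<sigma> \<Longrightarrow> x v = 0"
  unfolding closed_simplex_def by blast
lemma cs_sum: "x \<in> closed_simplex \<sigma> \<Longrightarrow> sum x \<sigma> = 1"
  unfolding closed_simplex_def by blast

definition cf :: "('a vtx \<Rightarrow> real) \<Rightarrow> 'a vtx set \<Rightarrow> real" where
  "cf x S = (if S = {} then 0 else real (card S) * max 0 (Min (x ` S) - Sup (x ` (- S))))"

definition gg :: "('a vtx \<Rightarrow> real) \<Rightarrow> 'a vtx \<Rightarrow> real" where
  "gg x v = (case v of Bary F \<Rightarrow> cf x (fset F) | Base _ \<Rightarrow> 0)"

definition gamma :: "('a vtx \<Rightarrow> real) \<Rightarrow> 'a vtx \<Rightarrow> real" where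
  "gamma x v = gg x v / (\<Sum>w\<in>{w. gg x w \<noteq> 0}. gg x w)"

lemma image_compl_cs:
  fixes x :: "'a vtx \<Rightarrow> real"
  assumes x: "x \<in> closed_simplex \<sigma>" and fin: "finite \<sigma>" "finite S"
  shows "x ` (- S) = insert 0 (x ` (\<sigma> - S))"
proof
  show "x ` (-S) \<subseteq> insert 0 (x ` (\<sigma> - S))"
  proof
    fix r assume "r \<in> x ` (-S)"
    then obtain u where u: "u \<notin> S" "r = x u" by auto
    show "r \<in> insert 0 (x ` (\<sigma> - S))"
    proof (cases "u \<in> \<sigma>")
      case True then show ?thesis using u by auto
    next
      case False then show ?thesis using u cs_zero[OF x] by auto
    qed
  qed
  have "finite (S \<union> \<sigma>)" using fin by simp
  then obtain u0 where u0: "u0 \<notin> S \<union> \<sigma>" using ex_new_if_finite[OF infinite_vtx] by blast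
  then have "x u0 = 0" "u0 \<in> -S" using cs_zero[OF x] by auto
  then have "0 \<in> x ` (-S)" by (metis imageI)
  then show "insert 0 (x ` (\<sigma> - S)) \<subseteq> x ` (-S)" by auto
qed

lemma Sup_compl_cs:
  fixes x :: "'a vtx \<Rightarrow> real"
  assumes x: "x \<in> closed_simplex \<sigma>" and fin: "finite \<sigma>" "finite S"
  shows "Sup (x ` (- S)) = Max (insert 0 (x ` (\<sigma> - S)))"
  unfolding image_compl_cs[OF assms] using fin by (intro cSup_eq_Max) auto

lemma gg_nonneg: "0 \<le> gg x v"
  unfolding gg_def cf_def by (auto split: vtx.split)

lemma gg_props:
  fixes x :: "'a vtx \<Rightarrow> real"
  assumes x: "x \<in> closed_simplex \<sigma>" "finite \<sigma>" and ne: "gg x v \<noteq> 0"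
  obtains S where "v = BA S" "finite S" "S \<noteq> {}" "S \<subseteq> \<sigma>" "0 < Min (x ` S)"
    "\<And>u. u \<in> S \<longleftrightarrow> Min (x ` S) \<le> x u"
proof -
  obtain F where vF: "v = Bary F" using ne unfolding gg_def by (cases v) auto
  define S where "S = fset F"
  have finS: "finite S" unfolding S_def by simp
  have vS: "v = BA S" unfolding S_def vF by (simp add: fset_inverse)
  have cfne: "cf x S \<noteq> 0" using ne unfolding gg_def vF S_def by simp
  then have Sne: "S \<noteq> {}" unfolding cf_def by auto
  define M where "M = Max (insert 0 (x ` (\<sigma> - S)))"
  have supM: "Sup (x ` (-S)) = M" unfolding M_def by (rule Sup_compl_cs[OF x finS])
  have pos: "Min (x ` S) - M > 0"
    using cfne Sne unfolding cf_def supM by (auto simp: max_def split: if_splits)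
  have M0: "0 \<le> M" unfolding M_def using x(2) by (intro Max_ge) auto
  have outM: "x u \<le> M" if "u \<notin> S" for u
  proof (cases "u \<in> \<sigma>")
    case True then show ?thesis unfolding M_def using x(2) that by (intro Max_ge) auto
  next
    case False then show ?thesis using cs_zero[OF x(1)] M0 by simp
  qed
  have minpos: "0 < Min (x ` S)" using pos M0 by linarith
  have up: "u \<in> S \<longleftrightarrow> Min (x ` S) \<le> x u" for u
  proof
    assume "u \<in> S" then show "Min (x ` S) \<le> x u" using finS by (intro Min_le) auto
  next
    assume a: "Min (x ` S) \<le> x u"
    show "u \<in> S"
    proof (rule ccontr)
      assume "u \<notin> S" then have "x u \<le> M" by (rule outM)
      then show False using a pos by linarith
    qed
  qed
  have sub: "S \<subseteq> \<sigma>"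
  proof
    fix u assume "u \<in> S"
    then have "Min (x ` S) \<le> x u" using up by blast
    then have xu: "0 < x u" using minpos by linarith
    show "u \<in> \<sigma>"
    proof (rule ccontr)
      assume "u \<notin> \<sigma>" then have "x u = 0" by (rule cs_zero[OF x(1)])
      then show False using xu by simp
    qed
  qed
  show ?thesis using that[OF vS finS Sne sub minpos up] .
qed

lemma gg_support_sub:
  fixes x :: "'a vtx \<Rightarrow> real"
  assumes x: "x \<in> closed_simplex \<sigma>" "finite \<sigma>"
  shows "{w. gg x w \<noteq> 0} \<subseteq> BA ` Pow \<sigma>"
proof
  fix w assume "w \<in> {w. gg x w \<noteq> 0}"
  then have ne: "gg x w \<noteq> 0" by simp
  obtain S where "w = BA S" "S \<subseteq> \<sigma>"
    by (rule gg_props[OF x ne]) blast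
  then show "w \<in> BA ` Pow \<sigma>" by blast
qed

lemma gg_support_finite:
  fixes x :: "'a vtx \<Rightarrow> real"
  assumes x: "x \<in> closed_simplex \<sigma>" "finite \<sigma>"
  shows "finite {w. gg x w \<noteq> 0}"
  by (rule finite_subset[OF gg_support_sub[OF x]]) (simp add: x(2))

lemma gg_exists_pos:
  fixes x :: "'a vtx \<Rightarrow> real"
  assumes x: "x \<in> closed_simplex \<sigma>" and fin: "finite \<sigma>" and ne: "\<sigma> \<noteq> {}"
  shows "\<exists>v. 0 < gg x v"
proof -
  define Mx where "Mx = Max (x ` \<sigma>)"
  have "\<exists>u\<in>\<sigma>. 0 < x u"
  proof (rule ccontr)
    assume "\<not> (\<exists>u\<in>\<sigma>. 0 < x u)"
    then have "sum x \<sigma> \<le> 0" by (intro sum_nonpos) auto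
    then show False using cs_sum[OF x] by simp
  qed
  then obtain u1 where u1: "u1 \<in> \<sigma>" "0 < x u1" by blast
  have "x u1 \<le> Mx" unfolding Mx_def using u1 fin by (intro Max_ge) auto
  then have Mxpos: "0 < Mx" using u1 by linarith
  define S where "S = {u \<in> \<sigma>. x u = Mx}"
  have finS: "finite S" unfolding S_def using fin by simp
  have "Mx \<in> x ` \<sigma>" unfolding Mx_def using fin ne by (intro Max_in) auto
  then have Sne: "S \<noteq> {}" unfolding S_def by auto
  have xS: "x ` S = {Mx}"
  proof
    show "x ` S \<subseteq> {Mx}" unfolding S_def by blast
    show "{Mx} \<subseteq> x ` S" using Sne unfolding S_def by blast
  qed
  have minS: "Min (x ` S) = Mx" unfolding xS by simp
  define M where "M = Max (insert 0 (x ` (\<sigma> - S)))"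
  have "M < Mx" unfolding M_def
  proof (subst Max_less_iff)
    show "finite (insert 0 (x ` (\<sigma> - S)))" using fin by simp
    show "insert 0 (x ` (\<sigma> - S)) \<noteq> {}" by simp
    show "\<forall>r\<in>insert 0 (x ` (\<sigma> - S)). r < Mx"
    proof
      fix r assume "r \<in> insert 0 (x ` (\<sigma> - S))"
      then consider "r = 0" | u where "u \<in> \<sigma>" "u \<notin> S" "r = x u" by blast
      then show "r < Mx"
      proof cases
        case 1 then show ?thesis using Mxpos by simp
      next
        case 2
        have "x u \<le> Mx" unfolding Mx_def using 2 fin by (intro Max_ge) auto
        moreover have "x u \<noteq> Mx" using 2 unfolding S_def by auto
        ultimately show ?thesis using 2 by simp
      qed
    qed
  qed
  have supM: "Sup (x ` (-S)) = M" unfolding M_def by (rule Sup_compl_cs[OF x fin finS])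
  have "0 < cf x S" unfolding cf_def supM minS using Sne finS \<open>M < Mx\<close>
    by (simp add: card_gt_0_iff)
  moreover have "gg x (BA S) = cf x S" unfolding gg_def using finS by simp
  ultimately show ?thesis by metis
qed

lemma gg_sum_pos:
  fixes x :: "'a vtx \<Rightarrow> real"
  assumes x: "x \<in> closed_simplex \<sigma>" and fin: "finite \<sigma>" and ne: "\<sigma> \<noteq> {}"
  shows "0 < (\<Sum>w\<in>{w. gg x w \<noteq> 0}. gg x w)"
proof -
  obtain v where v: "0 < gg x v" using gg_exists_pos[OF assms] by blast
  have "gg x v \<le> (\<Sum>w\<in>{w. gg x w \<noteq> 0}. gg x w)"
    using v gg_support_finite[OF x fin] gg_nonneg by (intro member_le_sum) auto
  then show ?thesis using v by linarith
qed

lemma gg_upper: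
  fixes x :: "'a vtx \<Rightarrow> real"
  assumes x: "x \<in> closed_simplex \<sigma>" "finite \<sigma>" and S: "finite S" and ne: "gg x (BA S) \<noteq> 0"
  shows "\<And>u. u \<in> S \<longleftrightarrow> Min (x ` S) \<le> x u" "S \<subseteq> \<sigma>" "S \<noteq> {}"
proof -
  obtain S' where S': "BA S = BA S'" "finite S'" "S' \<noteq> {}" "S' \<subseteq> \<sigma>"
    "\<And>u. u \<in> S' \<longleftrightarrow> Min (x ` S') \<le> x u"
    by (rule gg_props[OF x ne]) blast
  have eq: "S = S'" using BA_inj[OF S S'(2) S'(1)] .
  show "\<And>u. u \<in> S \<longleftrightarrow> Min (x ` S) \<le> x u" unfolding eq by (rule S'(5))
  show "S \<subseteq> \<sigma>" "S \<noteq> {}" unfolding eq by (rule S'(4), rule S'(3))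
qed

lemma gamma_in:
  fixes x :: "'a vtx \<Rightarrow> real"
  assumes L: "simplicial_complex L" and \<sigma>: "\<sigma> \<in> L" and x: "x \<in> closed_simplex \<sigma>"
  shows "gamma x \<in> closed_simplex {w. gg x w \<noteq> 0}" "{w. gg x w \<noteq> 0} \<in> bsd L"
proof -
  have fin: "finite \<sigma>" using L \<sigma> by (rule simplicial_finite)
  have ne: "\<sigma> \<noteq> {}" using L \<sigma> by (rule simplicial_nonempty)
  define D where "D = {w. gg x w \<noteq> 0}"
  have finD: "finite D" unfolding D_def using gg_support_finite[OF x fin] .
  have pos: "0 < sum (gg x) D" unfolding D_def using gg_sum_pos[OF x fin ne] .
  show "gamma x \<in> closed_simplex {w. gg x w \<noteq> 0}"
    unfolding closed_simplex_def D_def[symmetric]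
  proof (intro CollectI conjI allI impI)
    fix v show "0 \<le> gamma x v" unfolding gamma_def D_def[symmetric]
      using pos gg_nonneg by (intro divide_nonneg_nonneg) auto
  next
    fix v assume "v \<notin> D" then show "gamma x v = 0" unfolding gamma_def D_def by simp
  next
    have "sum (gamma x) D = (\<Sum>v\<in>D. gg x v / sum (gg x) D)"
      unfolding gamma_def D_def[symmetric] by simp
    also have "\<dots> = sum (gg x) D / sum (gg x) D"
      by (rule sum_divide_distrib[symmetric])
    finally have "sum (gamma x) D = sum (gg x) D / sum (gg x) D" .
    then show "sum (gamma x) D = 1" using pos by simp
  qed
  define C where "C = {S. S \<noteq> {} \<and> S \<subseteq> \<sigma> \<and> BA S \<in> D}"
  have DC: "D = BA ` C"
  proof
    show "D \<subseteq> BA ` C"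
    proof
      fix w assume w: "w \<in> D"
      then have ne: "gg x w \<noteq> 0" unfolding D_def by simp
      obtain S where "w = BA S" "S \<noteq> {}" "S \<subseteq> \<sigma>"
        by (rule gg_props[OF x fin ne]) blast
      then show "w \<in> BA ` C" using w unfolding C_def by blast
    qed
    show "BA ` C \<subseteq> D" unfolding C_def by blast
  qed
  have CL: "C \<subseteq> L"
  proof
    fix S assume "S \<in> C"
    then have "S \<subseteq> \<sigma>" "S \<noteq> {}" unfolding C_def by blast+
    then show "S \<in> L" by (rule simplicial_face[OF L \<sigma>])
  qed
  have finC: "finite C"
  proof (rule finite_subset)
    show "C \<subseteq> Pow \<sigma>" unfolding C_def by blast
    show "finite (Pow \<sigma>)" using fin by simp
  qed
  obtain v where "0 < gg x v" using gg_exists_pos[OF x fin ne] by blast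
  then have "v \<in> D" unfolding D_def by simp
  then have neC: "C \<noteq> {}" using DC by blast
  have chC: "chainset C" unfolding chainset_def
  proof (intro ballI)
    fix S1 S2 assume S1: "S1 \<in> C" and S2: "S2 \<in> C"
    have "S1 \<subseteq> \<sigma>" "S2 \<subseteq> \<sigma>" using S1 S2 unfolding C_def by blast+
    then have f1: "finite S1" and f2: "finite S2" using finite_subset fin by blast+
    have n1: "gg x (BA S1) \<noteq> 0" using S1 unfolding C_def D_def by simp
    have n2: "gg x (BA S2) \<noteq> 0" using S2 unfolding C_def D_def by simp
    have u1: "\<And>u. u \<in> S1 \<longleftrightarrow> Min (x ` S1) \<le> x u" by (rule gg_upper[OF x fin f1 n1])
    have u2: "\<And>u. u \<in> S2 \<longleftrightarrow> Min (x ` S2) \<le> x u" by (rule gg_upper[OF x fin f2 n2])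
    show "S1 \<subseteq> S2 \<or> S2 \<subseteq> S1"
    proof (cases "Min (x ` S1) \<le> Min (x ` S2)")
      case True
      have "S2 \<subseteq> S1"
      proof
        fix u assume "u \<in> S2"
        then have "Min (x ` S2) \<le> x u" using u2 by blast
        then have "Min (x ` S1) \<le> x u" using True by linarith
        then show "u \<in> S1" using u1 by blast
      qed
      then show ?thesis by blast
    next
      case False
      have "S1 \<subseteq> S2"
      proof
        fix u assume "u \<in> S1"
        then have "Min (x ` S1) \<le> x u" using u1 by blast
        then have "Min (x ` S2) \<le> x u" using False by linarith
        then show "u \<in> S2" using u2 by blast
      qed
      then show ?thesis by blast
    qed
  qed
  show "{w. gg x w \<noteq> 0} \<in> bsd L"
    unfolding D_def[symmetric] mem_bsd using DC CL finC neC chC by blast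
qed

lemma cont_Min:
  assumes "finite S" "S \<noteq> {}"
  shows "continuous_on A (\<lambda>x::'v \<Rightarrow> real. Min (x ` S))"
  using assms
proof (induction S rule: finite_ne_induct)
  case (singleton a) then show ?case by (simp add: cont_coord)
next
  case (insert a F)
  have "continuous_on A (\<lambda>x::'v \<Rightarrow> real. min (x a) (Min (x ` F)))"
    by (intro continuous_on_min cont_coord insert.IH)
  then show ?case using insert.hyps by simp
qed

lemma cont_Max0:
  assumes "finite T"
  shows "continuous_on A (\<lambda>x::'v \<Rightarrow> real. Max (insert 0 (x ` T)))"
  using assms
proof (induction T rule: finite_induct)
  case empty then show ?case by simp
next
  case (insert a F)
  have "continuous_on A (\<lambda>x::'v \<Rightarrow> real. max (x a) (Max (insert 0 (x ` F))))"
    by (intro continuous_on_max cont_coord insert.IH)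
  moreover have "Max (insert 0 (x ` insert a F)) = max (x a) (Max (insert 0 (x ` F)))" for x :: "'v \<Rightarrow> real"
  proof -
    have "insert 0 (x ` insert a F) = insert (x a) (insert 0 (x ` F))" by auto
    then show ?thesis using Max_insert[of "insert 0 (x ` F)" "x a"] insert.hyps by simp
  qed
  ultimately show ?case by simp
qed

lemma gg_cont:
  assumes fin: "finite \<sigma>"
  shows "continuous_on (closed_simplex \<sigma>) (\<lambda>x. gg x v)"
proof (cases v)
  case (Base a) then show ?thesis unfolding gg_def by simp
next
  case (Bary F)
  define S where "S = fset F"
  have finS: "finite S" unfolding S_def by simp
  have ggS: "gg x v = cf x S" for x unfolding gg_def Bary S_def by simp
  show ?thesis
  proof (cases "S = {}")
    case True then show ?thesis unfolding ggS cf_def by simp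
  next
    case Sne: False
    show ?thesis
    proof (cases "S \<subseteq> \<sigma>")
      case True
      have "continuous_on (closed_simplex \<sigma>)
          (\<lambda>x. real (card S) * max 0 (Min (x ` S) - Max (insert 0 (x ` (\<sigma> - S)))))"
        using finS Sne fin
        by (intro continuous_on_mult continuous_on_const continuous_on_max continuous_on_diff cont_Min cont_Max0) auto
      then show ?thesis
      proof (rule continuous_on_eq)
        fix x assume x: "x \<in> closed_simplex \<sigma>"
        show "real (card S) * max 0 (Min (x ` S) - Max (insert 0 (x ` (\<sigma> - S)))) = gg x v"
          unfolding ggS cf_def using Sne Sup_compl_cs[OF x fin finS] by simp
      qed
    next
      case False
      then obtain u0 where u0: "u0 \<in> S" "u0 \<notin> \<sigma>" by blast
      have "continuous_on (closed_simplex \<sigma>) (\<lambda>x. 0::real)" by simp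
      then show ?thesis
      proof (rule continuous_on_eq)
        fix x assume x: "x \<in> closed_simplex \<sigma>"
        have "Min (x ` S) \<le> x u0" using finS u0 by (intro Min_le) auto
        also have "x u0 = 0" using cs_zero[OF x u0(2)] .
        finally have m: "Min (x ` S) \<le> 0" .
        have "0 \<le> Max (insert 0 (x ` (\<sigma> - S)))" using fin by (intro Max_ge) auto
        then show "0 = gg x v"
          unfolding ggS cf_def using Sne m Sup_compl_cs[OF x fin finS] by simp
      qed
    qed
  qed
qed

lemma gamma_cont:
  assumes fin: "finite \<sigma>" and ne: "\<sigma> \<noteq> {}"
  shows "continuous_on (closed_simplex \<sigma>) gamma"
proof (rule continuous_on_coordinatewise_then_product)
  fix v
  have finB: "finite (BA ` Pow \<sigma>)" using fin by simp
  have eq: "sum (gg x) {w. gg x w \<noteq> 0} = sum (gg x) (BA ` Pow \<sigma>)" if x: "x \<in> closed_simplex \<sigma>" for x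
    by (rule sum.mono_neutral_left[OF finB gg_support_sub[OF x fin]]) auto
  have "continuous_on (closed_simplex \<sigma>) (\<lambda>x. gg x v / sum (gg x) (BA ` Pow \<sigma>))"
  proof (intro continuous_on_divide gg_cont fin continuous_on_sum ballI)
    fix x assume x: "x \<in> closed_simplex \<sigma>"
    show "sum (gg x) (BA ` Pow \<sigma>) \<noteq> 0" using gg_sum_pos[OF x fin ne] eq[OF x] by simp
  qed
  then show "continuous_on (closed_simplex \<sigma>) (\<lambda>x. gamma x v)"
    by (rule continuous_on_eq) (simp add: gamma_def eq)
qed



lemma cs_mono:
  assumes "finite \<sigma>'" "\<sigma> \<subseteq> \<sigma>'" "x \<in> closed_simplex \<sigma>"
  shows "x \<in> closed_simplex \<sigma>'"
  unfolding closed_simplex_def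
proof (intro CollectI conjI allI impI)
  fix v show "0 \<le> x v" using cs_nonneg[OF assms(3)] .
next
  fix v assume "v \<notin> \<sigma>'" then show "x v = 0" using cs_zero[OF assms(3)] assms(2) by blast
next
  have "sum x \<sigma>' = sum x \<sigma>"
    by (rule sum.mono_neutral_right[OF assms(1,2)]) (use cs_zero[OF assms(3)] in auto)
  then show "sum x \<sigma>' = 1" using cs_sum[OF assms(3)] by simp
qed

lemma cs_convex:
  assumes "x \<in> closed_simplex \<sigma>" "z \<in> closed_simplex \<sigma>" "0 \<le> t" "t \<le> 1"
  shows "(\<lambda>v. (1 - t) * x v + t * z v) \<in> closed_simplex \<sigma>"
  unfolding closed_simplex_def
proof (intro CollectI conjI allI impI)
  fix v show "0 \<le> (1 - t) * x v + t * z v"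
    using cs_nonneg[OF assms(1)] cs_nonneg[OF assms(2)] assms(3,4) by simp
next
  fix v assume "v \<notin> \<sigma>" then show "(1 - t) * x v + t * z v = 0"
    using cs_zero[OF assms(1)] cs_zero[OF assms(2)] by simp
next
  have "(\<Sum>v\<in>\<sigma>. (1 - t) * x v + t * z v) = (1 - t) * sum x \<sigma> + t * sum z \<sigma>"
    by (simp add: sum.distrib sum_distrib_left)
  then show "(\<Sum>v\<in>\<sigma>. (1 - t) * x v + t * z v) = 1"
    using cs_sum[OF assms(1)] cs_sum[OF assms(2)] by simp
qed

lemma straight_homotopy:
  fixes f :: "('v \<Rightarrow> real) \<Rightarrow> 'v \<Rightarrow> real"
  assumes L: "simplicial_complex L"
    and fc: "\<And>\<sigma>. \<sigma> \<in> L \<Longrightarrow> continuous_on (closed_simplex \<sigma>) f"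
    and fi: "\<And>\<sigma>. \<sigma> \<in> L \<Longrightarrow> \<exists>\<sigma>'\<in>L. \<sigma> \<subseteq> \<sigma>' \<and> (\<forall>x\<in>closed_simplex \<sigma>. f x \<in> closed_simplex \<sigma>')"
  shows "homotopic_with (\<lambda>x. True) (realization L) (realization L) id f"
  unfolding homotopic_with_def
proof (intro exI conjI allI ballI)
  define H where "H = (\<lambda>p::real \<times> ('v \<Rightarrow> real). \<lambda>v. (1 - fst p) * snd p v + fst p * f (snd p) v)"
  have Hin: "H (t, x) \<in> closed_simplex \<sigma>'"
    if "t \<in> {0..1}" "x \<in> closed_simplex \<sigma>" "\<sigma>' \<in> L" "\<sigma> \<subseteq> \<sigma>'" "\<forall>x\<in>closed_simplex \<sigma>. f x \<in> closed_simplex \<sigma>'"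
    for t x \<sigma> \<sigma>'
  proof -
    have "x \<in> closed_simplex \<sigma>'"
      using cs_mono[OF simplicial_finite[OF L that(3)] that(4,2)] .
    then show ?thesis unfolding H_def using that(1,2,5) by (intro cs_convex) auto
  qed
  show "continuous_map (prod_topology (top_of_set {0..1}) (realization L)) (realization L) H"
  proof (rule continuous_map_from_prod_realization)
    fix \<sigma> assume s: "\<sigma> \<in> L"
    obtain \<sigma>' where s': "\<sigma>' \<in> L" "\<sigma> \<subseteq> \<sigma>'" "\<forall>x\<in>closed_simplex \<sigma>. f x \<in> closed_simplex \<sigma>'"
      using fi[OF s] by blast
    have "continuous_map (top_of_set ({0..1} \<times> closed_simplex \<sigma>)) (realization L) H"
    proof (rule continuous_map_into_realization[where T="{\<sigma>'}"])
      have c1: "continuous_on ({0..1::real} \<times> closed_simplex \<sigma>) (\<lambda>p. f (snd p))"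
        by (rule continuous_on_compose2[OF fc[OF s] continuous_on_snd[OF continuous_on_id]]) auto
      have c2: "continuous_on ({0..1::real} \<times> closed_simplex \<sigma>) (snd :: real \<times> ('v \<Rightarrow> real) \<Rightarrow> _)"
        by (rule continuous_on_snd[OF continuous_on_id])
      have "continuous_on ({0..1} \<times> closed_simplex \<sigma>) H"
        unfolding H_def
      proof (rule continuous_on_coordinatewise_then_product)
        fix v
        have c3: "continuous_on ({0..1::real} \<times> closed_simplex \<sigma>) (\<lambda>p. f (snd p) v)"
          by (rule continuous_on_compose2[OF cont_coord[of UNIV v] c1]) auto
        have c4: "continuous_on ({0..1::real} \<times> closed_simplex \<sigma>) (\<lambda>p::real \<times> ('v \<Rightarrow> real). snd p v)"
          by (rule continuous_on_compose2[OF cont_coord[of UNIV v] c2]) auto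
        have c5: "continuous_on ({0..1::real} \<times> closed_simplex \<sigma>) (fst :: real \<times> ('v \<Rightarrow> real) \<Rightarrow> real)"
          by (rule continuous_on_fst[OF continuous_on_id])
        show "continuous_on ({0..1} \<times> closed_simplex \<sigma>) (\<lambda>p. (1 - fst p) * snd p v + fst p * f (snd p) v)"
          by (intro continuous_on_add continuous_on_mult continuous_on_diff continuous_on_const c3 c4 c5)
      qed
      then show "continuous_map (top_of_set ({0..1} \<times> closed_simplex \<sigma>)) euclidean H" by simp
      show "finite {\<sigma>'}" "{\<sigma>'} \<subseteq> L" using s' by auto
      show "\<And>\<tau>. \<tau> \<in> L \<Longrightarrow> finite \<tau>" using L by (rule simplicial_finite)
      fix p assume "p \<in> topspace (top_of_set ({0..1::real} \<times> closed_simplex \<sigma>))"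
      then obtain t x where p: "p = (t, x)" "t \<in> {0..1}" "x \<in> closed_simplex \<sigma>" by auto
      show "H p \<in> (\<Union>\<tau>\<in>{\<sigma>'}. closed_simplex \<tau>)" unfolding p(1) using Hin[OF p(2,3) s'] by simp
    qed
    then show "continuous_map (prod_topology (top_of_set {0..1}) (top_of_set (closed_simplex \<sigma>))) (realization L) H"
      by simp
  next
    fix t x assume t: "t \<in> {0..1::real}" and x: "x \<in> rspace L"
    then obtain \<sigma> where s: "\<sigma> \<in> L" "x \<in> closed_simplex \<sigma>" by blast
    obtain \<sigma>' where s': "\<sigma>' \<in> L" "\<sigma> \<subseteq> \<sigma>'" "\<forall>x\<in>closed_simplex \<sigma>. f x \<in> closed_simplex \<sigma>'"
      using fi[OF s(1)] by blast
    have "H (t, x) \<in> closed_simplex \<sigma>'" using Hin[OF t s(2) s'] .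
    then show "H (t, x) \<in> topspace (realization L)" unfolding topspace_realization using s'(1) by blast
  qed
  fix x
  show "H (0, x) = id x" unfolding H_def by (rule ext) simp
  show "H (1, x) = f x" unfolding H_def by (rule ext) simp
qed simp

lemma gamma_beta_in:
  assumes L: "simplicial_complex L" and C: "C \<subseteq> L" "finite C" "C \<noteq> {}" "chainset C"
    and y: "y \<in> closed_simplex (BA ` C)"
  shows "gamma (beta y) \<in> closed_simplex (BA ` C)"
proof -
  have finC: "\<And>s. s \<in> C \<Longrightarrow> finite s" using C L simplicial_finite by blast
  have inj: "inj_on BA C" by (rule inj_on_BA[OF finC])
  have fin\<tau>: "finite (BA ` C)" using C by simp
  define x where "x = beta y"
  have xf: "x u = (\<Sum>s\<in>C. y (BA s) * wt (BA s) u)" for u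
    unfolding x_def using beta_on[OF y fin\<tau>] sum.reindex[OF inj] by (simp add: o_def)
  have top: "\<Union>C \<in> C" using chain_Union_mem C unfolding chainset_def by blast
  have topL: "\<Union>C \<in> L" using top C by blast
  have fintop: "finite (\<Union>C)" using finC C by blast
  have xin: "x \<in> closed_simplex (\<Union>C)" unfolding x_def by (rule beta_in[OF L C y])
  have ynn: "\<And>z. y z \<ge> 0" using y unfolding closed_simplex_def by blast
  have mono: "x u \<le> x w" if h: "\<forall>s\<in>C. u \<in> s \<longrightarrow> w \<in> s" for u w
    unfolding xf
  proof (rule sum_mono)
    fix s assume s: "s \<in> C"
    have "wt (BA s) u \<le> wt (BA s) w"
      using h s finC[OF s] by (auto simp: wt_BA)
    then show "y (BA s) * wt (BA s) u \<le> y (BA s) * wt (BA s) w"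
      using ynn by (intro mult_left_mono) auto
  qed
  have DsubC: "{w. gg x w \<noteq> 0} \<subseteq> BA ` C"
  proof
    fix w assume "w \<in> {w. gg x w \<noteq> 0}"
    then have ne: "gg x w \<noteq> 0" by simp
    obtain S where S: "w = BA S" "finite S" "S \<noteq> {}" "S \<subseteq> \<Union>C"
      by (rule gg_props[OF xin fintop ne]) blast
    have neS: "gg x (BA S) \<noteq> 0" using ne S(1) by simp
    have up: "\<And>u. u \<in> S \<longleftrightarrow> Min (x ` S) \<le> x u" by (rule gg_upper[OF xin fintop S(2) neS])
    have mu: "\<exists>s\<in>C. u \<in> s \<and> s \<subseteq> S" if uS: "u \<in> S" for u
    proof -
      define Cu where "Cu = {s\<in>C. u \<in> s}"
      have "Cu \<noteq> {}" using uS S(4) unfolding Cu_def by blast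
      moreover have "finite Cu" using C(2) unfolding Cu_def by simp
      moreover have "\<forall>s\<in>Cu. \<forall>t\<in>Cu. s \<subseteq> t \<or> t \<subseteq> s" using C(4) unfolding Cu_def chainset_def by blast
      ultimately have "\<Inter>Cu \<in> Cu" using chain_Inter_mem[of Cu] by blast
      then have mC: "\<Inter>Cu \<in> C" "u \<in> \<Inter>Cu" unfolding Cu_def by blast+
      have "\<Inter>Cu \<subseteq> S"
      proof
        fix w assume "w \<in> \<Inter>Cu"
        then have "\<forall>s\<in>C. u \<in> s \<longrightarrow> w \<in> s" unfolding Cu_def by blast
        then have "x u \<le> x w" by (rule mono)
        moreover have "Min (x ` S) \<le> x u" using up uS by blast
        ultimately have "Min (x ` S) \<le> x w" by linarith
        then show "w \<in> S" using up by blast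
      qed
      then show ?thesis using mC by blast
    qed
    define C' where "C' = {s\<in>C. s \<subseteq> S}"
    have SC': "S = \<Union>C'"
    proof
      show "S \<subseteq> \<Union>C'"
      proof
        fix u assume "u \<in> S"
        then obtain s where "s \<in> C" "u \<in> s" "s \<subseteq> S" using mu by blast
        then show "u \<in> \<Union>C'" unfolding C'_def by blast
      qed
      show "\<Union>C' \<subseteq> S" unfolding C'_def by blast
    qed
    have "C' \<noteq> {}"
    proof -
      obtain u where "u \<in> S" using S(3) by blast
      then obtain s where "s \<in> C" "s \<subseteq> S" using mu by blast
      then show ?thesis unfolding C'_def by blast
    qed
    moreover have "finite C'" using C(2) unfolding C'_def by simp
    moreover have "\<forall>s\<in>C'. \<forall>t\<in>C'. s \<subseteq> t \<or> t \<subseteq> s" using C(4) unfolding C'_def chainset_def by blast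
    ultimately have "\<Union>C' \<in> C'" using chain_Union_mem[of C'] by blast
    then have "S \<in> C" using SC' unfolding C'_def by simp
    then show "w \<in> BA ` C" using S(1) by blast
  qed
  have g: "gamma x \<in> closed_simplex {w. gg x w \<noteq> 0}" by (rule gamma_in(1)[OF L topL xin])
  have "gamma x \<in> closed_simplex (BA ` C)"
    by (rule cs_mono[OF fin\<tau> DsubC g])
  then show ?thesis unfolding x_def .
qed

lemma beta_map:
  assumes L: "simplicial_complex L"
  shows "continuous_map (realization (bsd L)) (realization L) beta"
proof (rule continuous_map_from_realization)
  fix \<tau> assume "\<tau> \<in> bsd L"
  then obtain C where C: "\<tau> = BA ` C" "C \<subseteq> L" "finite C" "C \<noteq> {}" "chainset C"
    unfolding mem_bsd by blast
  have top: "\<Union>C \<in> C" using chain_Union_mem C unfolding chainset_def by blast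
  have topL: "\<Union>C \<in> L" using top C by blast
  show "continuous_map (top_of_set (closed_simplex \<tau>)) (realization L) beta"
  proof (rule continuous_map_into_realization[where T="{\<Union>C}"])
    show "continuous_map (top_of_set (closed_simplex \<tau>)) euclidean beta"
      using beta_cont[of \<tau>] C by simp
    show "finite {\<Union>C}" "{\<Union>C} \<subseteq> L" using topL by auto
    show "\<And>\<tau>. \<tau> \<in> L \<Longrightarrow> finite \<tau>" using L by (rule simplicial_finite)
    fix x assume "x \<in> topspace (top_of_set (closed_simplex \<tau>))"
    then have "x \<in> closed_simplex (BA ` C)" using C(1) by simp
    then show "beta x \<in> (\<Union>\<tau>\<in>{\<Union>C}. closed_simplex \<tau>)" using beta_in[OF L C(2-5)] by simp
  qed
next
  fix x assume "x \<in> rspace (bsd L)"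
  then obtain \<tau> where "\<tau> \<in> bsd L" "x \<in> closed_simplex \<tau>" by blast
  then obtain C where C: "\<tau> = BA ` C" "C \<subseteq> L" "finite C" "C \<noteq> {}" "chainset C"
    unfolding mem_bsd by blast
  have top: "\<Union>C \<in> C" using chain_Union_mem C unfolding chainset_def by blast
  have topL: "\<Union>C \<in> L" using top C by blast
  have "beta x \<in> closed_simplex (\<Union>C)" using beta_in[OF L C(2-5)] \<open>x \<in> closed_simplex \<tau>\<close> C(1) by simp
  then show "beta x \<in> topspace (realization L)" unfolding topspace_realization using topL by blast
qed

lemma gamma_map:
  assumes L: "simplicial_complex L"
  shows "continuous_map (realization L) (realization (bsd L)) gamma"
proof (rule continuous_map_from_realization)
  fix \<sigma> assume s: "\<sigma> \<in> L"
  have fin: "finite \<sigma>" using L s by (rule simplicial_finite)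
  have ne: "\<sigma> \<noteq> {}" using L s by (rule simplicial_nonempty)
  define T where "T = {\<tau> \<in> bsd L. \<tau> \<subseteq> BA ` Pow \<sigma>}"
  show "continuous_map (top_of_set (closed_simplex \<sigma>)) (realization (bsd L)) gamma"
  proof (rule continuous_map_into_realization[where T=T])
    show "continuous_map (top_of_set (closed_simplex \<sigma>)) euclidean gamma"
      using gamma_cont[OF fin ne] by simp
    have "T \<subseteq> Pow (BA ` Pow \<sigma>)" unfolding T_def by blast
    moreover have "finite (Pow (BA ` Pow \<sigma>))" using fin by simp
    ultimately show "finite T" by (rule finite_subset)
    show "T \<subseteq> bsd L" unfolding T_def by blast
    show "\<And>\<tau>. \<tau> \<in> bsd L \<Longrightarrow> finite \<tau>" using simplicial_bsd[OF L] by (rule simplicial_finite)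
    fix x assume "x \<in> topspace (top_of_set (closed_simplex \<sigma>))"
    then have x: "x \<in> closed_simplex \<sigma>" by simp
    have "{w. gg x w \<noteq> 0} \<in> T" unfolding T_def using gamma_in(2)[OF L s x] gg_support_sub[OF x fin] by blast
    then show "gamma x \<in> (\<Union>\<tau>\<in>T. closed_simplex \<tau>)" using gamma_in(1)[OF L s x] by blast
  qed
next
  fix x assume "x \<in> rspace L"
  then obtain \<sigma> where s: "\<sigma> \<in> L" "x \<in> closed_simplex \<sigma>" by blast
  then show "gamma x \<in> topspace (realization (bsd L))"
    unfolding topspace_realization using gamma_in[OF L s] by blast
qed

lemma contractible_bsd:
  assumes L: "simplicial_complex L" and c: "contractible_space (realization L)"
  shows "contractible_space (realization (bsd L))"
proof -
  obtain a where h: "homotopic_with (\<lambda>x. True) (realization L) (realization L) id (\<lambda>x. a)"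
    using c unfolding contractible_space_def by blast
  have LB: "simplicial_complex (bsd L)" by (rule simplicial_bsd[OF L])
  have h1: "homotopic_with (\<lambda>x. True) (realization (bsd L)) (realization (bsd L)) id (gamma \<circ> beta)"
  proof (rule straight_homotopy[OF LB])
    fix \<tau> assume "\<tau> \<in> bsd L"
    then obtain C where C: "\<tau> = BA ` C" "C \<subseteq> L" "finite C" "C \<noteq> {}" "chainset C"
      unfolding mem_bsd by blast
    have top: "\<Union>C \<in> C" using chain_Union_mem C unfolding chainset_def by blast
    have topL: "\<Union>C \<in> L" using top C by blast
    have ft: "finite (\<Union>C)" using L topL by (rule simplicial_finite)
    have nt: "\<Union>C \<noteq> {}" using L topL by (rule simplicial_nonempty)
    show "continuous_on (closed_simplex \<tau>) (gamma \<circ> beta)"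
    proof (rule continuous_on_compose)
      show "continuous_on (closed_simplex \<tau>) beta" using beta_cont[of \<tau>] C by simp
      show "continuous_on (beta ` closed_simplex \<tau>) gamma"
        by (rule continuous_on_subset[OF gamma_cont[OF ft nt]]) (use beta_in[OF L C(2-5)] C(1) in auto)
    qed
    show "\<exists>\<sigma>'\<in>bsd L. \<tau> \<subseteq> \<sigma>' \<and> (\<forall>x\<in>closed_simplex \<tau>. (gamma \<circ> beta) x \<in> closed_simplex \<sigma>')"
      using gamma_beta_in[OF L C(2-5)] C(1) \<open>\<tau> \<in> bsd L\<close> by auto
  qed
  have h2: "homotopic_with (\<lambda>x. True) (realization (bsd L)) (realization (bsd L))
      (gamma \<circ> (id \<circ> beta)) (gamma \<circ> ((\<lambda>x. a) \<circ> beta))"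
    by (rule homotopic_with_compose_continuous_map_left[OF
          homotopic_with_compose_continuous_map_right[OF h beta_map[OF L]] gamma_map[OF L]]) auto
  have "gamma \<circ> (id \<circ> beta) = gamma \<circ> beta" by (simp add: o_def)
  moreover have "gamma \<circ> ((\<lambda>x. a) \<circ> beta) = (\<lambda>x. gamma a)" by (simp add: o_def)
  ultimately have h2': "homotopic_with (\<lambda>x. True) (realization (bsd L)) (realization (bsd L)) (gamma \<circ> beta) (\<lambda>x. gamma a)"
    using h2 by simp
  show ?thesis unfolding contractible_space_def using homotopic_with_trans[OF h1 h2'] by blast
qed

lemma contractible_cone:
  assumes L: "simplicial_complex L" and cone: "\<And>\<sigma>. \<sigma> \<in> L \<Longrightarrow> insert u \<sigma> \<in> L"
  shows "contractible_space (realization L)"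
proof -
  define d where "d = (\<lambda>v. if v = u then 1 else (0::real))"
  have "homotopic_with (\<lambda>x. True) (realization L) (realization L) id (\<lambda>x. d)"
  proof (rule straight_homotopy[OF L])
    fix \<sigma> assume s: "\<sigma> \<in> L"
    show "continuous_on (closed_simplex \<sigma>) (\<lambda>x. d)" by simp
    have fin: "finite (insert u \<sigma>)" using L cone[OF s] by (rule simplicial_finite)
    have "d \<in> closed_simplex (insert u \<sigma>)"
      unfolding closed_simplex_def d_def using fin by (auto simp: sum.delta)
    then show "\<exists>\<sigma>'\<in>L. \<sigma> \<subseteq> \<sigma>' \<and> (\<forall>x\<in>closed_simplex \<sigma>. d \<in> closed_simplex \<sigma>')"
      using cone[OF s] by blast
  qed
  then show ?thesis unfolding contractible_space_def by blast
qed



fun carr :: "nat \<Rightarrow> 'a vtx \<Rightarrow> 'a vtx set" where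
  "carr 0 z = {z}"
| "carr (Suc n) z = (case z of Bary F \<Rightarrow> (\<Union>w\<in>fset F. carr n w) | Base _ \<Rightarrow> {})"

definition carrS :: "nat \<Rightarrow> 'a vtx set \<Rightarrow> 'a vtx set" where
  "carrS n \<sigma> = (\<Union>z\<in>\<sigma>. carr n z)"

definition faces :: "'v set \<Rightarrow> 'v set set" where
  "faces s = {t. t \<noteq> {} \<and> t \<subseteq> s}"

lemma carr_BA: "finite s \<Longrightarrow> carr (Suc n) (BA s) = (\<Union>w\<in>s. carr n w)"
  by simp

lemma carr1_BA: "finite s \<Longrightarrow> carr 1 (BA s) = s"
  by simp

lemma carr_sub: "w \<in> carr 1 z \<Longrightarrow> carr m w \<subseteq> carr (Suc m) z"
proof (cases z)
  case (Base a) assume "w \<in> carr 1 z" then show ?thesis using Base by simp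
next
  case (Bary F) assume "w \<in> carr 1 z"
  then have "w \<in> fset F" using Bary by simp
  then show ?thesis using Bary by auto
qed

lemma carr_add: "carr (Suc n) z = (\<Union>w\<in>carr n z. carr 1 w)"
proof (induction n arbitrary: z)
  case 0 then show ?case by simp
next
  case (Suc n)
  show ?case
  proof (cases z)
    case (Base a) then show ?thesis by simp
  next
    case (Bary F)
    have "carr (Suc (Suc n)) z = (\<Union>w\<in>fset F. carr (Suc n) w)" using Bary by simp
    also have "\<dots> = (\<Union>w\<in>fset F. \<Union>w'\<in>carr n w. carr 1 w')" using Suc.IH by simp
    also have "\<dots> = (\<Union>w'\<in>(\<Union>w\<in>fset F. carr n w). carr 1 w')" by blast
    also have "(\<Union>w\<in>fset F. carr n w) = carr (Suc n) z" using Bary by simp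
    finally show ?thesis .
  qed
qed

lemma carrS_mono: "\<sigma> \<subseteq> \<tau> \<Longrightarrow> carrS n \<sigma> \<subseteq> carrS n \<tau>"
  unfolding carrS_def by blast

lemma faces_mono: "s \<subseteq> t \<Longrightarrow> faces s \<subseteq> faces t"
  unfolding faces_def by blast

lemma support:
  assumes L: "simplicial_complex L" and s: "\<sigma> \<in> (bsd ^^ n) L"
  shows "carrS n \<sigma> \<in> L \<and> \<sigma> \<in> (bsd ^^ n) (faces (carrS n \<sigma>))"
  using s
proof (induction n arbitrary: \<sigma>)
  case 0
  then have "\<sigma> \<noteq> {}" using L simplicial_nonempty by auto
  then show ?case using 0 unfolding carrS_def faces_def by simp
next
  case (Suc n)
  then have "\<sigma> \<in> bsd ((bsd ^^ n) L)" by simp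
  then obtain C where C: "\<sigma> = BA ` C" "C \<subseteq> (bsd ^^ n) L" "finite C" "C \<noteq> {}" "chainset C"
    unfolding mem_bsd by blast
  have Ln: "simplicial_complex ((bsd ^^ n) L)" by (rule simplicial_bsd_pow[OF L])
  have finC: "\<And>c. c \<in> C \<Longrightarrow> finite c" using C(2) simplicial_finite[OF Ln] by blast
  have top: "\<Union>C \<in> C" using chain_Union_mem C(3,4,5) unfolding chainset_def by blast
  have eq: "carrS (Suc n) \<sigma> = carrS n (\<Union>C)"
  proof -
    have "carrS (Suc n) \<sigma> = (\<Union>c\<in>C. carr (Suc n) (BA c))" unfolding carrS_def C(1) by blast
    also have "\<dots> = (\<Union>c\<in>C. carrS n c)" unfolding carrS_def using finC by simp
    also have "\<dots> = carrS n (\<Union>C)" unfolding carrS_def by blast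
    finally show ?thesis .
  qed
  have IHtop: "carrS n (\<Union>C) \<in> L" using Suc.IH[of "\<Union>C"] top C(2) by blast
  have "C \<subseteq> (bsd ^^ n) (faces (carrS n (\<Union>C)))"
  proof
    fix c assume c: "c \<in> C"
    then have "c \<in> (bsd ^^ n) (faces (carrS n c))" using Suc.IH[of c] C(2) by blast
    moreover have "faces (carrS n c) \<subseteq> faces (carrS n (\<Union>C))"
      using c by (intro faces_mono carrS_mono) blast
    ultimately show "c \<in> (bsd ^^ n) (faces (carrS n (\<Union>C)))" using bsd_pow_mono by blast
  qed
  then have "\<sigma> \<in> bsd ((bsd ^^ n) (faces (carrS n (\<Union>C))))"
    unfolding mem_bsd using C by blast
  then show ?case using eq IHtop by simp
qed

inductive walk :: "'v set set \<Rightarrow> nat \<Rightarrow> 'v \<Rightarrow> 'v \<Rightarrow> bool" for K where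
  walk0: "walk K 0 y y"
| walkS: "\<sigma> \<in> K \<Longrightarrow> y \<in> \<sigma> \<Longrightarrow> y' \<in> \<sigma> \<Longrightarrow> walk K n y' z \<Longrightarrow> walk K (Suc n) y z"

lemma vert_bsd:
  assumes "\<sigma> \<in> bsd L" "y \<in> \<sigma>"
  shows "\<exists>s\<in>L. y = BA s"
  using assms unfolding mem_bsd by blast

lemma adj_bsd:
  assumes L: "simplicial_complex L" and "\<sigma> \<in> bsd L" "BA s \<in> \<sigma>" "BA t \<in> \<sigma>" "s \<in> L" "t \<in> L"
  shows "s \<subseteq> t \<or> t \<subseteq> s"
proof -
  obtain C where C: "\<sigma> = BA ` C" "C \<subseteq> L" "finite C" "C \<noteq> {}" "chainset C"
    using assms(2) unfolding mem_bsd by blast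
  obtain s' where s': "s' \<in> C" "BA s = BA s'" using assms(3) C(1) by blast
  obtain t' where t': "t' \<in> C" "BA t = BA t'" using assms(4) C(1) by blast
  have "s = s'" using BA_inj s'(2) simplicial_finite[OF L] assms(5) s'(1) C(2) by blast
  moreover have "t = t'" using BA_inj t'(2) simplicial_finite[OF L] assms(6) t'(1) C(2) by blast
  ultimately show ?thesis using C(5) s'(1) t'(1) unfolding chainset_def by blast
qed

lemma walk_halve:
  assumes L: "simplicial_complex L"
  shows "walk (bsd L) n y z \<Longrightarrow> (\<exists>\<sigma>\<in>bsd L. y \<in> \<sigma>) \<Longrightarrow>
    \<exists>w w' k. w \<in> carr 1 y \<and> w' \<in> carr 1 z \<and> k \<le> (n + 1) div 2 \<and> walk L k w w'"
proof (induction n arbitrary: y z rule: less_induct)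
  case (less n)
  obtain \<sigma>0 where s0: "\<sigma>0 \<in> bsd L" "y \<in> \<sigma>0" using less.prems(2) by blast
  obtain s where s: "s \<in> L" "y = BA s" using vert_bsd[OF s0] by blast
  have fs: "finite s" "s \<noteq> {}" using s(1) L simplicial_finite simplicial_nonempty by blast+
  have cy: "carr 1 y = s" using s(2) fs by simp
  show ?case
  proof (cases n)
    case 0
    then have "z = y" using less.prems(1) by (auto elim: walk.cases)
    obtain w where "w \<in> s" using fs by blast
    then show ?thesis using cy \<open>z = y\<close> 0 by (intro exI[of _ w] exI[of _ w] exI[of _ 0]) (auto intro: walk0)
  next
    case (Suc m)
    then obtain \<sigma>1 y1 where st1: "\<sigma>1 \<in> bsd L" "y \<in> \<sigma>1" "y1 \<in> \<sigma>1" "walk (bsd L) m y1 z"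
      using less.prems(1) by (auto elim: walk.cases)
    obtain s1 where s1: "s1 \<in> L" "y1 = BA s1" using vert_bsd[OF st1(1,3)] by blast
    have fs1: "finite s1" "s1 \<noteq> {}" using s1(1) L simplicial_finite simplicial_nonempty by blast+
    have c01: "s \<subseteq> s1 \<or> s1 \<subseteq> s" using adj_bsd[OF L st1(1)] st1(2,3) s s1 by blast
    obtain w where w: "w \<in> s" "w \<in> s1" using c01 fs fs1 by blast
    show ?thesis
    proof (cases m)
      case 0
      then have "z = y1" using st1(4) by (auto elim: walk.cases)
      then have "w \<in> carr 1 z" using w s1 fs1 by simp
      then show ?thesis using cy w Suc 0
        by (intro exI[of _ w] exI[of _ w] exI[of _ 0]) (auto intro: walk0)
    next
      case (Suc m')
      then obtain \<sigma>2 y2 where st2: "\<sigma>2 \<in> bsd L" "y1 \<in> \<sigma>2" "y2 \<in> \<sigma>2" "walk (bsd L) m' y2 z"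
        using st1(4) by (auto elim: walk.cases)
      obtain s2 where s2: "s2 \<in> L" "y2 = BA s2" using vert_bsd[OF st2(1,3)] by blast
      have fs2: "finite s2" "s2 \<noteq> {}" using s2(1) L simplicial_finite simplicial_nonempty by blast+
      have c12: "s1 \<subseteq> s2 \<or> s2 \<subseteq> s1" using adj_bsd[OF L st2(1)] st2(2,3) s1 s2 by blast
      have "m' < n" using \<open>n = Suc m\<close> Suc by simp
      then obtain x w' k where IH: "x \<in> carr 1 y2" "w' \<in> carr 1 z" "k \<le> (m' + 1) div 2" "walk L k x w'"
        using less.IH[of m' y2 z] st2 by blast
      have xs2: "x \<in> s2" using IH(1) s2 fs2 by simp
      have "\<exists>\<tau>\<in>L. w \<in> \<tau> \<and> x \<in> \<tau>"
      proof (cases "s2 \<subseteq> s1")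
        case True then show ?thesis using s1 w xs2 by blast
      next
        case False then have "s1 \<subseteq> s2" using c12 by blast
        then show ?thesis using s2 w xs2 by blast
      qed
      then obtain \<tau> where "\<tau> \<in> L" "w \<in> \<tau>" "x \<in> \<tau>" by blast
      then have "walk L (Suc k) w w'" using IH(4) by (rule walkS)
      moreover have "Suc k \<le> (n + 1) div 2" using IH(3) \<open>n = Suc m\<close> Suc by simp
      ultimately show ?thesis using cy w IH(2) by blast
    qed
  qed
qed

lemma carr_meet:
  assumes L: "simplicial_complex L"
  shows "walk ((bsd ^^ Suc r) L) n y z \<Longrightarrow> n \<le> 2 ^ r \<Longrightarrow> (\<exists>\<sigma>\<in>(bsd ^^ Suc r) L. y \<in> \<sigma>) \<Longrightarrow>
    carr (Suc r) y \<inter> carr (Suc r) z \<noteq> {}"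
proof (induction r arbitrary: n y z)
  case 0
  then have w: "walk (bsd L) n y z" and n1: "n \<le> 1" and yv: "\<exists>\<sigma>\<in>bsd L. y \<in> \<sigma>" by simp_all
  obtain \<sigma>0 where s0: "\<sigma>0 \<in> bsd L" "y \<in> \<sigma>0" using yv by blast
  obtain s where s: "s \<in> L" "y = BA s" using vert_bsd[OF s0] by blast
  have fs: "finite s" "s \<noteq> {}" using s(1) L simplicial_finite simplicial_nonempty by blast+
  have cy: "carr 1 y = s" using s(2) fs by simp
  show ?case
  proof (cases n)
    case 0
    then have "z = y" using w by (auto elim: walk.cases)
    then show ?thesis using cy fs by simp
  next
    case (Suc m)
    then have m0: "m = 0" using n1 by simp
    obtain \<sigma>1 y1 where st1: "\<sigma>1 \<in> bsd L" "y \<in> \<sigma>1" "y1 \<in> \<sigma>1" "walk (bsd L) m y1 z"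
      using w Suc by (auto elim: walk.cases)
    have "z = y1" using st1(4) m0 by (auto elim: walk.cases)
    obtain s1 where s1: "s1 \<in> L" "y1 = BA s1" using vert_bsd[OF st1(1,3)] by blast
    have fs1: "finite s1" "s1 \<noteq> {}" using s1(1) L simplicial_finite simplicial_nonempty by blast+
    have c01: "s \<subseteq> s1 \<or> s1 \<subseteq> s" using adj_bsd[OF L st1(1)] st1(2,3) s s1 by blast
    have "s \<inter> s1 \<noteq> {}" using c01 fs fs1 by blast
    then show ?thesis using cy s1 fs1 \<open>z = y1\<close> by simp
  qed
next
  case (Suc r)
  define L' where "L' = (bsd ^^ Suc r) L"
  have L': "simplicial_complex L'" unfolding L'_def by (rule simplicial_bsd_pow[OF L])
  have w: "walk (bsd L') n y z" using Suc.prems(1) unfolding L'_def by simp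
  have yv: "\<exists>\<sigma>\<in>bsd L'. y \<in> \<sigma>" using Suc.prems(3) unfolding L'_def by simp
  obtain w w' k where W: "w \<in> carr 1 y" "w' \<in> carr 1 z" "k \<le> (n + 1) div 2" "walk L' k w w'"
    using walk_halve[OF L' w yv] by blast
  have "k \<le> 2 ^ r" using W(3) Suc.prems(2) by simp
  obtain \<sigma>0 where s0: "\<sigma>0 \<in> bsd L'" "y \<in> \<sigma>0" using yv by blast
  obtain s where s: "s \<in> L'" "y = BA s" using vert_bsd[OF s0] by blast
  have fs: "finite s" using s(1) L' simplicial_finite by blast
  have "w \<in> s" using W(1) s(2) fs by simp
  then have wv: "\<exists>\<sigma>\<in>(bsd ^^ Suc r) L. w \<in> \<sigma>" using s(1) unfolding L'_def by blast
  have "carr (Suc r) w \<inter> carr (Suc r) w' \<noteq> {}"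
    using Suc.IH[OF W(4)[unfolded L'_def] \<open>k \<le> 2 ^ r\<close> wv] .
  moreover have "carr (Suc r) w \<subseteq> carr (Suc (Suc r)) y" by (rule carr_sub[OF W(1)])
  moreover have "carr (Suc r) w' \<subseteq> carr (Suc (Suc r)) z" by (rule carr_sub[OF W(2)])
  ultimately show ?case by blast
qed

lemma links_walk: "links K p v w \<Longrightarrow> walk K (length p) v w"
proof (induction p arbitrary: v)
  case Nil then show ?case by (simp add: links_def)
next
  case (Cons \<sigma> ps)
  have \<sigma>K: "\<sigma> \<in> K" and v\<sigma>: "v \<in> \<sigma>" using Cons.prems unfolding links_def by auto
  show ?case
  proof (cases "ps = []")
    case True
    then have "w \<in> \<sigma>" using Cons.prems unfolding links_def by simp
    then have "walk K (Suc 0) v w" by (rule walkS[OF \<sigma>K v\<sigma> _ walk0])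
    then show ?thesis using True by simp
  next
    case False
    have all: "\<forall>i. Suc i < length (\<sigma>#ps) \<longrightarrow> (\<sigma>#ps) ! i \<inter> (\<sigma>#ps) ! Suc i \<noteq> {}"
      using Cons.prems unfolding links_def by blast
    have "Suc 0 < length (\<sigma>#ps)" using False by simp
    then have "(\<sigma>#ps) ! 0 \<inter> (\<sigma>#ps) ! Suc 0 \<noteq> {}" using all by blast
    then have "\<sigma> \<inter> hd ps \<noteq> {}" using False by (simp add: hd_conv_nth)
    then obtain x where x: "x \<in> \<sigma>" "x \<in> hd ps" by blast
    have "links K ps x w"
      unfolding links_def
    proof (intro conjI allI impI ballI)
      show "ps \<noteq> []" by (rule False)
      fix \<tau> assume "\<tau> \<in> set ps"
      then show "\<tau> \<in> K" "card \<tau> = 2" using Cons.prems unfolding links_def by auto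
    next
      show "x \<in> hd ps" by (rule x(2))
      show "w \<in> last ps" using Cons.prems False unfolding links_def by simp
    next
      fix i assume "Suc i < length ps"
      then have "Suc (Suc i) < length (\<sigma>#ps)" by simp
      then have "(\<sigma>#ps) ! Suc i \<inter> (\<sigma>#ps) ! Suc (Suc i) \<noteq> {}"
        using Cons.prems unfolding links_def by blast
      then show "ps ! i \<inter> ps ! Suc i \<noteq> {}" by simp
    qed
    then have "walk K (length ps) x w" by (rule Cons.IH)
    then have "walk K (Suc (length ps)) v w" by (rule walkS[OF \<sigma>K v\<sigma> x(1)])
    then show ?thesis by simp
  qed
qed

lemma simplicial_Base:
  assumes "simplicial_complex K"
  shows "simplicial_complex ((`) Base ` K)"
  unfolding simplicial_complex_def
proof (intro conjI ballI allI impI)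
  fix \<sigma> assume "\<sigma> \<in> (`) Base ` K"
  then obtain s where "s \<in> K" "\<sigma> = Base ` s" by blast
  then show "finite \<sigma>" "\<sigma> \<noteq> {}" using assms simplicial_finite simplicial_nonempty by blast+
next
  fix \<sigma> \<tau> assume s: "\<sigma> \<in> (`) Base ` K" and t: "\<tau> \<subseteq> \<sigma> \<and> \<tau> \<noteq> {}"
  then obtain s where s: "s \<in> K" "\<sigma> = Base ` s" by blast
  define s' where "s' = {a \<in> s. Base a \<in> \<tau>}"
  have "\<tau> = Base ` s'" using t s(2) unfolding s'_def by blast
  moreover have "s' \<subseteq> s" "s' \<noteq> {}" using t s(2) unfolding s'_def by blast+
  then have "s' \<in> K" using simplicial_face[OF assms s(1)] by blast
  ultimately show "\<tau> \<in> (`) Base ` K" by blast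
qed

lemma contractible_bsd_pow:
  "simplicial_complex L \<Longrightarrow> contractible_space (realization L) \<Longrightarrow> contractible_space (realization ((bsd ^^ n) L))"
  by (induction n) (auto intro: contractible_bsd simplicial_bsd_pow)



lemma good_apex:
  fixes K :: "'a set set" and m :: nat
  assumes K: "simplicial_complex K"
    and A: "subcomplex (iterated_bsd (Suc (Suc m)) K) A" "A \<noteq> {}"
    and D: "diameter (iterated_bsd (Suc (Suc m)) K) A \<le> enat m"
  shows "\<exists>u. \<forall>\<sigma>\<in>A. u \<in> carrS (Suc (Suc m)) \<sigma>"
proof -
  define K0 where "K0 = (`) Base ` K"
  define Kk where "Kk = iterated_bsd (Suc (Suc m)) K"
  have K0s: "simplicial_complex K0" unfolding K0_def by (rule simplicial_Base[OF K])
  have K1s: "simplicial_complex (bsd K0)" by (rule simplicial_bsd[OF K0s])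
  have Kk1: "Kk = (bsd ^^ Suc m) (bsd K0)"
    unfolding Kk_def iterated_bsd_def K0_def by (simp only: funpow_Suc_right o_apply)
  have Kks: "simplicial_complex Kk" unfolding Kk1 by (rule simplicial_bsd_pow[OF K1s])
  have AK: "A \<subseteq> Kk" and As: "simplicial_complex A" using A(1) unfolding subcomplex_def Kk_def by auto
  obtain \<sigma>0 where s0: "\<sigma>0 \<in> A" using A(2) by blast
  then obtain y0 where y0: "y0 \<in> \<sigma>0" using simplicial_nonempty[OF As] by blast
  have y0K: "{y0} \<in> Kk" using simplicial_face[OF Kks _ _] s0 AK y0 by blast
  have "carrS (Suc m) {y0} \<in> bsd K0" using support[OF K1s, of "{y0}" "Suc m"] y0K Kk1 by simp
  then have cy0: "carr (Suc m) y0 \<in> bsd K0" unfolding carrS_def by simp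
  then obtain C0 where C0: "carr (Suc m) y0 = BA ` C0" "C0 \<subseteq> K0" "finite C0" "C0 \<noteq> {}" "chainset C0"
    unfolding mem_bsd by blast
  have cm: "\<Inter>C0 \<in> C0" using chain_Inter_mem C0(3,4,5) unfolding chainset_def by blast
  then have "\<Inter>C0 \<noteq> {}" using simplicial_nonempty[OF K0s] C0(2) by blast
  then obtain u where u: "u \<in> \<Inter>C0" by blast
  have uz: "u \<in> carr (Suc (Suc m)) z" if z: "z \<in> vertices A" for z
  proof -
    have y0v: "y0 \<in> vertices A" unfolding vertices_def using s0 y0 by blast
    have "link_dist Kk y0 z \<le> enat m"
      using D y0v z unfolding diameter_def Kk_def by (auto simp: SUP_le_iff)
    also have "\<dots> < enat (Suc m)" by simp
    finally have "(INF p\<in>{p. links Kk p y0 z}. enat (length p)) < enat (Suc m)"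
      unfolding link_dist_def .
    then obtain p where p: "links Kk p y0 z" "enat (length p) < enat (Suc m)"
      unfolding INF_less_iff by blast
    have lp: "length p \<le> 2 ^ m"
    proof -
      have "length p \<le> m" using p(2) by simp
      moreover have "m < 2 ^ m" by (rule less_exp)
      ultimately show ?thesis by linarith
    qed
    have w: "walk ((bsd ^^ Suc m) (bsd K0)) (length p) y0 z" using links_walk[OF p(1)] Kk1 by simp
    have y0v': "\<exists>\<sigma>\<in>(bsd ^^ Suc m) (bsd K0). y0 \<in> \<sigma>" using s0 AK y0 Kk1 by blast
    have "carr (Suc m) y0 \<inter> carr (Suc m) z \<noteq> {}" by (rule carr_meet[OF K1s w lp y0v'])
    then obtain v where v: "v \<in> carr (Suc m) y0" "v \<in> carr (Suc m) z" by blast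
    then obtain c where c: "c \<in> C0" "v = BA c" using C0(1) by blast
    have fc: "finite c" using c(1) C0(2) simplicial_finite[OF K0s] by blast
    have "u \<in> c" using u c(1) by blast
    then have "u \<in> carr 1 v" using c(2) fc by simp
    then show ?thesis using v(2) carr_add[of "Suc m" z] by blast
  qed
  show ?thesis
  proof (intro exI ballI)
    fix \<sigma> assume s: "\<sigma> \<in> A"
    then obtain z where "z \<in> \<sigma>" using simplicial_nonempty[OF As] by blast
    then have "z \<in> vertices A" unfolding vertices_def using s by blast
    then show "u \<in> carrS (Suc (Suc m)) \<sigma>" using uz \<open>z \<in> \<sigma>\<close> unfolding carrS_def by blast
  qed
qed

theorem mainTheorem7:
  fixes K :: "'a set set" and m :: nat
  assumes "simplicial_complex K" and "m > 0"
  shows "\<exists>k::nat. k > 0 \<and> m_fine m (iterated_bsd k K)"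
proof (intro exI conjI)
  define k where "k = Suc (Suc m)"
  define K0 where "K0 = (`) Base ` K"
  have K0s: "simplicial_complex K0" unfolding K0_def by (rule simplicial_Base[OF assms(1)])
  have KkE: "iterated_bsd k K = (bsd ^^ k) K0" unfolding iterated_bsd_def K0_def ..
  have Kks: "simplicial_complex (iterated_bsd k K)" unfolding KkE by (rule simplicial_bsd_pow[OF K0s])
  define LA where "LA A = {t. t \<noteq> {} \<and> (\<exists>\<sigma>\<in>A. t \<subseteq> carrS k \<sigma>)}" for A :: "'a vtx set set"
  define Z where "Z A = (bsd ^^ k) (LA A)" for A
  have LAmono: "LA A \<subseteq> LA B" if "A \<subseteq> B" for A B unfolding LA_def using that by blast
  show "0 < k" unfolding k_def by simp
  show "m_fine m (iterated_bsd k K)"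
    unfolding m_fine_def
  proof (intro exI[of _ Z] conjI allI impI)
    fix A assume H: "subcomplex (iterated_bsd k K) A \<and> A \<noteq> {} \<and> diameter (iterated_bsd k K) A \<le> enat m"
    have AK: "A \<subseteq> (bsd ^^ k) K0" using H unfolding subcomplex_def KkE by blast
    have carrK0: "carrS k \<sigma> \<in> K0" if "\<sigma> \<in> A" for \<sigma> using support[OF K0s, of \<sigma> k] AK that by blast
    have LAK0: "LA A \<subseteq> K0"
    proof
      fix t assume "t \<in> LA A"
      then obtain \<sigma> where "\<sigma> \<in> A" "t \<subseteq> carrS k \<sigma>" "t \<noteq> {}" unfolding LA_def by blast
      then show "t \<in> K0" using simplicial_face[OF K0s carrK0] by blast
    qed
    have LAs: "simplicial_complex (LA A)"
      unfolding simplicial_complex_def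
    proof (intro conjI ballI allI impI)
      fix t assume "t \<in> LA A"
      then show "finite t" "t \<noteq> {}" using LAK0 simplicial_finite[OF K0s] unfolding LA_def by blast+
    next
      fix t t' assume "t \<in> LA A" "t' \<subseteq> t \<and> t' \<noteq> {}"
      then show "t' \<in> LA A" unfolding LA_def by blast
    qed
    obtain u where u: "\<forall>\<sigma>\<in>A. u \<in> carrS k \<sigma>"
      using good_apex[OF assms(1), of m A] H unfolding k_def by blast
    have cone: "insert u t \<in> LA A" if "t \<in> LA A" for t
      using that u unfolding LA_def by blast
    have "contractible_space (realization (LA A))" by (rule contractible_cone[OF LAs cone])
    then have "contractible_space (realization (Z A))" unfolding Z_def by (rule contractible_bsd_pow[OF LAs])
    then show "contractible_complex (Z A)" unfolding contractible_complex_def .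
    have "Z A \<subseteq> iterated_bsd k K" unfolding Z_def KkE by (rule bsd_pow_mono[OF LAK0])
    moreover have "simplicial_complex (Z A)" unfolding Z_def by (rule simplicial_bsd_pow[OF LAs])
    ultimately show "subcomplex (iterated_bsd k K) (Z A)" unfolding subcomplex_def by blast
    show "A \<subseteq> Z A"
    proof
      fix \<sigma> assume s: "\<sigma> \<in> A"
      have "\<sigma> \<in> (bsd ^^ k) (faces (carrS k \<sigma>))" using support[OF K0s, of \<sigma> k] AK s by blast
      moreover have "faces (carrS k \<sigma>) \<subseteq> LA A" unfolding faces_def LA_def using s by blast
      ultimately show "\<sigma> \<in> Z A" unfolding Z_def using bsd_pow_mono by blast
    qed
  next
    fix A B assume "subcomplex (iterated_bsd k K) A \<and> A \<noteq> {} \<and> diameter (iterated_bsd k K) A \<le> enat m \<and>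
             subcomplex (iterated_bsd k K) B \<and> B \<noteq> {} \<and> diameter (iterated_bsd k K) B \<le> enat m \<and> A \<subseteq> B"
    then have "A \<subseteq> B" by blast
    then show "Z A \<subseteq> Z B" unfolding Z_def by (intro bsd_pow_mono LAmono)
  qed
qed


end
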